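(* Let $h\in(0,2\pi)$, $\alpha>0$ and $T>0$ be constants. Let $k\colon[0,2\pi]\to(0,+\infty)$ be a twice continuously differentiable positive function with $k(0)=k(2\pi)$, $k'(0)=k'(2\pi)$, and let $\varphi\colon[-h,2\pi]\to[0,+\infty)$ be a twice continuously differentiable nonnegative function with $\int_0^{2\pi}\varphi(x)\,\mathrm{d}x=1$ and $\varphi(x)=\varphi(x+2\pi)$ for all $x\in[-h,0]$. Put $$\bar k=\max_{0\le x\le 2\pi}\max\{|k(x)|,|k'(x)|,|k''(x)|\}.$$ Define the sequence $(u^m)_{m\ge 0}$ of functions on $[0,2\pi]\times[0,T]$ by $u^0(x,t)=\varphi(x)$ and, for $m\ge0$, $u^{m+1}$ is the solution $v$ of the linear problem $$\frac{\partial v}{\partial t}-\alpha\frac{\partial^2 v}{\partial x^2}=\mathcal F u^m(x,t),\quad v(x,0)=\varphi(x),\quad v(0,t)=v(2\pi,t),\quad \frac{\partial v}{\partial x}(0,t)=\frac{\partial v}{\partial x}(2\pi,t),$$ for $0\le x\le 2\pi$, $0\le t\le T$, where $$\mathcal F u^m(x,t)=u^m(x,t)\bigl(k(x)\,u^m(x-h,t)-f[u^m(\cdot,t)]\bigr),\qquad f[u^m(\cdot,t)]=\int_0^{2\pi}k(x)\,u^m(x,t)\,u^m(x-h,t)\,\mathrm{d}x,$$ with the convention $u^m(x-h,t)=u^m(x-h+2\pi,t)$ whenever $x-h<0$. Then, if $\bar k$ is sufficiently small, the sequence of norms $\|u^m\|_{\mathbf C^{2,1}([0,2\pi]\times[0,T])}$,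 $m=0,1,2,\dots$, is uniformly bounded.
   Context: $\mathbf C^{2,1}([0,2\pi]\times[0,T])$ denotes the Banach space of continuous functions $w(x,t)$ on $[0,2\pi]\times[0,T]$ such that $\partial w/\partial x$, $\partial^2 w/\partial x^2$, $\partial w/\partial t$ are continuous on $[0,2\pi]\times[0,T]$ (continuity up to the boundary meaning the limits from the interior exist and are taken as boundary values), with norm $$\|w\|_{\mathbf C^{2,1}}=\max_{0\le x\le2\pi,\,0\le t\le T}\Bigl\{|w|+\Bigl|\tfrac{\partial w}{\partial x}\Bigr|+\Bigl|\tfrac{\partial^2 w}{\partial x^2}\Bigr|+\Bigl|\tfrac{\partial w}{\partial t}\Bigr|\Bigr\}.$$ $\mathbf C^{2}([0,2\pi])$ is defined analogously without $t$. "Sufficiently small" means: there is a threshold, depending on the remaining data ($\alpha$, $T$, $\varphi$), such that the conclusion holds whenever $\bar k$ is below it. *)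

theory Defs
  imports "HOL-Analysis.Analysis"
begin

definition rect :: "real \<Rightarrow> (real \<times> real) set" where
  "rect T = {0..2*pi} \<times> {0..T}"

definition C21_derivs ::
  "real \<Rightarrow> (real \<Rightarrow> real \<Rightarrow> real) \<Rightarrow> (real \<Rightarrow> real \<Rightarrow> real)
     \<Rightarrow> (real \<Rightarrow> real \<Rightarrow> real) \<Rightarrow> (real \<Rightarrow> real \<Rightarrow> real) \<Rightarrow> bool" where
  "C21_derivs T w wx wxx wt \<longleftrightarrow>
     continuous_on (rect T) (\<lambda>(x, t). w x t) \<and>
     continuous_on (rect T) (\<lambda>(x, t). wx x t) \<and>
     continuous_on (rect T) (\<lambda>(x, t). wxx x t) \<and>
     continuous_on (rect T) (\<lambda>(x, t). wt x t) \<and>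
     (\<forall>x t. 0 < x \<and> x < 2*pi \<and> 0 < t \<and> t < T \<longrightarrow>
        ((\<lambda>y. w y t) has_real_derivative wx x t) (at x) \<and>
        ((\<lambda>y. wx y t) has_real_derivative wxx x t) (at x) \<and>
        ((\<lambda>s. w x s) has_real_derivative wt x t) (at t))"

definition in_C21 :: "real \<Rightarrow> (real \<Rightarrow> real \<Rightarrow> real) \<Rightarrow> bool" where
  "in_C21 T w \<longleftrightarrow> (\<exists>wx wxx wt. C21_derivs T w wx wxx wt)"

text \<open>The C^{2,1} norm (the derivatives are uniquely determined on the rectangle).\<close>
definition C21_norm :: "real \<Rightarrow> (real \<Rightarrow> real \<Rightarrow> real) \<Rightarrow> real" where
  "C21_norm T w =
     (let d = (SOME d. C21_derivs T w (fst d) (fst (snd d)) (snd (snd d))) in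
      (SUP p\<in>rect T. \<bar>w (fst p) (snd p)\<bar> + \<bar>fst d (fst p) (snd p)\<bar>
          + \<bar>fst (snd d) (fst p) (snd p)\<bar> + \<bar>snd (snd d) (fst p) (snd p)\<bar>))"

definition shifted :: "real \<Rightarrow> (real \<Rightarrow> real \<Rightarrow> real) \<Rightarrow> real \<Rightarrow> real \<Rightarrow> real" where
  "shifted h u x t = (if x - h < 0 then u (x - h + 2*pi) t else u (x - h) t)"

definition fterm :: "(real \<Rightarrow> real) \<Rightarrow> real \<Rightarrow> (real \<Rightarrow> real \<Rightarrow> real) \<Rightarrow> real \<Rightarrow> real" where
  "fterm k h u t = integral {0..2*pi} (\<lambda>x. k x * u x t * shifted h u x t)"

definition Fop :: "(real \<Rightarrow> real) \<Rightarrow> real \<Rightarrow> (real \<Rightarrow> real \<Rightarrow> real) \<Rightarrow> real \<Rightarrow> real \<Rightarrow> real" where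
  "Fop k h u x t = u x t * (k x * shifted h u x t - fterm k h u t)"

definition solves_linear ::
  "real \<Rightarrow> real \<Rightarrow> (real \<Rightarrow> real) \<Rightarrow> (real \<Rightarrow> real \<Rightarrow> real) \<Rightarrow> (real \<Rightarrow> real \<Rightarrow> real) \<Rightarrow> bool" where
  "solves_linear \<alpha> T \<phi> g v \<longleftrightarrow>
     (\<exists>vx vxx vt. C21_derivs T v vx vxx vt \<and>
        (\<forall>x t. 0 \<le> x \<and> x \<le> 2*pi \<and> 0 \<le> t \<and> t \<le> T \<longrightarrow>
            vt x t - \<alpha> * vxx x t = g x t) \<and>
        (\<forall>x. 0 \<le> x \<and> x \<le> 2*pi \<longrightarrow> v x 0 = \<phi> x) \<and>
        (\<forall>t. 0 \<le> t \<and> t \<le> T \<longrightarrow> v 0 t = v (2*pi) t \<and> vx 0 t = vx (2*pi) t))"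

end

theory Submission
  imports Defs
begin

definition per :: "(real \<Rightarrow> 'a) \<Rightarrow> real \<Rightarrow> 'a" where
  "per f x = f (x - 2*pi* of_int (floor (x/(2*pi))))"

lemma per_at:
  assumes "2*pi* of_int n \<le> x" "x < 2*pi* of_int n + 2*pi"
  shows "per f x = f (x - 2*pi* of_int n)"
proof -
  have "floor (x/(2*pi)) = n"
  proof (rule floor_unique)
    show "of_int n \<le> x/(2*pi)" using assms(1) pi_gt_zero by (simp add: field_simps)
    show "x/(2*pi) < of_int n + 1" using assms(2) pi_gt_zero by (simp add: field_simps)
  qed
  thus ?thesis by (simp add: per_def)
qed

lemma per_at2:
  assumes "2*pi* of_int n \<le> x" "x \<le> 2*pi* of_int n + 2*pi" "f 0 = f (2*pi)"
  shows "per f x = f (x - 2*pi* of_int n)"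
proof (cases "x < 2*pi* of_int n + 2*pi")
  case True thus ?thesis using per_at assms by blast
next
  case False
  hence x: "x = 2*pi* of_int (n+1)" using assms by (simp add: algebra_simps)
  have "per f x = f (x - 2*pi* of_int (n+1))" by (rule per_at) (use x in auto)
  thus ?thesis using x assms(3) by (simp add: algebra_simps)
qed

lemma per_range: "0 \<le> x - 2*pi * of_int (floor (x/(2*pi)))" "x - 2*pi * of_int (floor (x/(2*pi))) < 2*pi"
proof -
  have "2*pi * of_int (floor (x/(2*pi))) \<le> 2*pi*(x/(2*pi))"
    by (rule mult_left_mono) simp_all
  thus "0 \<le> x - 2*pi * of_int (floor (x/(2*pi)))" by simp
  have "2*pi*(x/(2*pi)) < 2*pi * (of_int (floor (x/(2*pi))) + 1)"
    by (rule mult_strict_left_mono) simp_all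
  thus "x - 2*pi * of_int (floor (x/(2*pi))) < 2*pi" by (simp add: algebra_simps)
qed

lemma per_exists: "\<exists>y. 0 \<le> y \<and> y < 2*pi \<and> per f x = f y \<and> (\<exists>n. x = y + 2*pi* of_int n)"
  using per_range[of x] by (auto simp: per_def intro!: exI[of _ "x - 2*pi* of_int (floor (x/(2*pi)))"] exI[of _ "floor (x/(2*pi))"])

lemma per_eq: "0 \<le> x \<Longrightarrow> x < 2*pi \<Longrightarrow> per f x = f x"
  using per_at[of 0 x f] by simp

lemma per_eq2: "0 \<le> x \<Longrightarrow> x \<le> 2*pi \<Longrightarrow> f 0 = f (2*pi) \<Longrightarrow> per f x = f x"
  using per_at2[of 0 x f] by simp

lemma per_shift_int: "per f (x + 2*pi* of_int n) = per f x"
proof -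
  let ?m = "floor (x/(2*pi))"
  have "per f (x + 2*pi* of_int n) = f (x + 2*pi* of_int n - 2*pi* of_int (?m + n))"
    by (rule per_at) (use per_range[of x] in \<open>auto simp: algebra_simps\<close>)
  thus ?thesis by (simp add: per_def algebra_simps)
qed

lemma per_plus: "per f (x + 2*pi) = per f x"
  using per_shift_int[of f x 1] by simp

lemma per_minus: "per f (x - 2*pi) = per f x"
  using per_shift_int[of f x "-1"] by simp

lemma per_bound: "(\<And>y. 0 \<le> y \<Longrightarrow> y \<le> 2*pi \<Longrightarrow> P (f y)) \<Longrightarrow> P (per f x)"
  using per_range[of x] by (auto simp: per_def)


lemma C1_closed:
  fixes f d :: "real \<Rightarrow> real"
  assumes ab: "a < b" and cf: "continuous_on {a..b} f" and cd: "continuous_on {a..b} d"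
    and der: "\<And>x. a < x \<Longrightarrow> x < b \<Longrightarrow> (f has_real_derivative d x) (at x)"
    and x: "x \<in> {a..b}"
  shows "(f has_real_derivative d x) (at x within {a..b})"
proof -
  have eq: "f y = f a + integral {a..y} d" if y: "y \<in> {a..b}" for y
  proof -
    have "(d has_integral (f y - f a)) {a..y}"
    proof (rule fundamental_theorem_of_calculus_interior)
      show "a \<le> y" using y by simp
      show "continuous_on {a..y} f" by (rule continuous_on_subset[OF cf]) (use y in auto)
      show "(f has_vector_derivative d z) (at z)" if "z \<in> {a<..<y}" for z
        using der[of z] that y by (simp add: has_real_derivative_iff_has_vector_derivative)
    qed
    thus ?thesis by (simp add: integral_unique)
  qed
  have "((\<lambda>y. f a + integral {a..y} d) has_real_derivative d x) (at x within {a..b})"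
    using integral_has_real_derivative[OF cd x] by (auto intro!: derivative_eq_intros)
  thus ?thesis
  proof (rule has_field_derivative_transform_within[OF _ zero_less_one])
    show "x \<in> {a..b}" by (fact x)
    show "f a + integral {a..y} d = f y" if "y \<in> {a..b}" for y
      using eq[OF that] by simp
  qed
qed

lemma deriv_join:
  fixes f :: "real \<Rightarrow> real"
  assumes "a < x" "x < b"
    and "(f has_real_derivative D) (at x within {a..x})"
    and "(f has_real_derivative D) (at x within {x..b})"
  shows "(f has_real_derivative D) (at x)"
proof -
  have "{a..x} \<union> {x..b} = {a..b}" using assms by auto
  moreover have "((\<lambda>y. (f y - f x) / (y - x)) \<longlongrightarrow> D) (at x within {a..x} \<union> {x..b})"
    using assms(3,4) unfolding has_field_derivative_iff Lim_within_Un by blast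
  ultimately have "(f has_real_derivative D) (at x within {a..b})"
    unfolding has_field_derivative_iff by simp
  thus ?thesis using at_within_Icc_at[OF assms(1,2)] by simp
qed

lemma per_deriv:
  fixes f d :: "real \<Rightarrow> real"
  assumes cf: "continuous_on {0..2*pi} f" and cd: "continuous_on {0..2*pi} d"
    and der: "\<And>x. 0 < x \<Longrightarrow> x < 2*pi \<Longrightarrow> (f has_real_derivative d x) (at x)"
    and f0: "f 0 = f (2*pi)" and d0: "d 0 = d (2*pi)"
  shows "(per f has_real_derivative per d x) (at x)"
proof -
  obtain y n where y: "0 \<le> y" "y < 2*pi" and x: "x = y + 2*pi * of_int n"
    using per_exists[of d x] by blast
  have pdx: "per d x = d y" using x y per_shift_int[of d y n] per_eq[of y d] by simp
  have C: "(f has_real_derivative d z) (at z within {0..2*pi})" if "z \<in> {0..2*pi}" for z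
    using C1_closed[OF _ cf cd der that] by simp
  show ?thesis
  proof (cases "y = 0")
    case False
    hence y0: "0 < y" using y by simp
    have dy: "(f has_real_derivative d (x - 2*pi * of_int n)) (at (x - 2*pi * of_int n))"
      using der[OF y0 y(2)] x by simp
    have "((\<lambda>z. f (z - 2*pi * of_int n)) has_real_derivative d (x - 2*pi * of_int n) * 1) (at x)"
      by (rule DERIV_chain2[where f=f and g="\<lambda>z. z - 2*pi * of_int n", OF dy]) (auto intro!: derivative_eq_intros)
    hence "((\<lambda>z. f (z - 2*pi * of_int n)) has_real_derivative d y) (at x)" using x by simp
    moreover have "eventually (\<lambda>z. per f z = f (z - 2*pi * of_int n)) (nhds x)"
    proof -
      have "x \<in> {2*pi * of_int n<..<2*pi * of_int n + 2*pi}" using x y0 y by auto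
      hence "eventually (\<lambda>z. z \<in> {2*pi * of_int n<..<2*pi * of_int n + 2*pi}) (nhds x)"
        by (intro eventually_nhds_in_open) auto
      thus ?thesis by (rule eventually_mono) (auto intro: per_at)
    qed
    ultimately show ?thesis using pdx
      by (subst DERIV_cong_ev[OF refl _ refl]) (auto elim!: eventually_mono)
  next
    case True
    hence x: "x = 2*pi * of_int n" using x by simp
    have pdx: "per d x = d 0" using pdx True by simp
    have L: "(per f has_real_derivative d 0) (at x within {x - 2*pi..x})"
    proof -
      have "((\<lambda>z. f (z - 2*pi * of_int (n-1))) has_real_derivative d (2*pi)) (at x within {x - 2*pi..x})"
      proof -
        have "(f has_real_derivative d (2*pi)) (at (x - 2*pi * of_int (n-1)) within {0..2*pi})"
          using C[of "2*pi"] x by (simp add: algebra_simps)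
        moreover have "(\<lambda>z. z - 2*pi * of_int (n-1)) ` {x - 2*pi..x} \<subseteq> {0..2*pi}"
          by (auto simp: x algebra_simps)
        ultimately have "(f has_real_derivative d (2*pi)) (at (x - 2*pi * of_int (n-1)) within (\<lambda>z. z - 2*pi * of_int (n-1)) ` {x - 2*pi..x})"
          by (rule DERIV_subset)
        moreover have "((\<lambda>z. z - 2*pi * of_int (n-1)) has_real_derivative 1) (at x within {x - 2*pi..x})"
          by (auto intro!: derivative_eq_intros)
        ultimately have "((f \<circ> (\<lambda>z. z - 2*pi * of_int (n-1))) has_real_derivative d (2*pi) * 1) (at x within {x - 2*pi..x})"
          by (rule DERIV_image_chain)
        thus ?thesis by (simp add: o_def)
      qed
      note D = this
      have E: "f (z - 2*pi * of_int (n-1)) = per f z" if "z \<in> {x - 2*pi..x}" for z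
      proof -
        have "2*pi * of_int (n-1) \<le> z" "z \<le> 2*pi * of_int (n-1) + 2*pi"
          using that by (simp_all add: x algebra_simps)
        from per_at2[OF this f0] show ?thesis by simp
      qed
      have "x \<in> {x - 2*pi..x}" by simp
      from has_field_derivative_transform_within[OF D zero_less_one this E]
      show ?thesis using d0 by simp
    qed
    have R: "(per f has_real_derivative d 0) (at x within {x..x + 2*pi})"
    proof -
      have "((\<lambda>z. f (z - 2*pi * of_int n)) has_real_derivative d 0) (at x within {x..x + 2*pi})"
      proof -
        have "(f has_real_derivative d 0) (at (x - 2*pi * of_int n) within {0..2*pi})"
          using C[of 0] x by simp
        moreover have "(\<lambda>z. z - 2*pi * of_int n) ` {x..x + 2*pi} \<subseteq> {0..2*pi}"
          by (auto simp: x algebra_simps)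
        ultimately have "(f has_real_derivative d 0) (at (x - 2*pi * of_int n) within (\<lambda>z. z - 2*pi * of_int n) ` {x..x + 2*pi})"
          by (rule DERIV_subset)
        moreover have "((\<lambda>z. z - 2*pi * of_int n) has_real_derivative 1) (at x within {x..x + 2*pi})"
          by (auto intro!: derivative_eq_intros)
        ultimately have "((f \<circ> (\<lambda>z. z - 2*pi * of_int n)) has_real_derivative d 0 * 1) (at x within {x..x + 2*pi})"
          by (rule DERIV_image_chain)
        thus ?thesis by (simp add: o_def)
      qed
      note D = this
      have E: "f (z - 2*pi * of_int n) = per f z" if "z \<in> {x..x + 2*pi}" for z
      proof -
        have "2*pi * of_int n \<le> z" "z \<le> 2*pi * of_int n + 2*pi"
          using that by (simp_all add: x algebra_simps)
        from per_at2[OF this f0] show ?thesis by simp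
      qed
      have "x \<in> {x..x + 2*pi}" by simp
      from has_field_derivative_transform_within[OF D zero_less_one this E]
      show ?thesis .
    qed
    show ?thesis using deriv_join[OF _ _ L R] pdx by simp
  qed
qed


lemma MVT_deriv:
  fixes f f' :: "real \<Rightarrow> real"
  assumes ab: "a < b" and cf: "continuous_on {a..b} f"
    and der: "\<And>x. a < x \<Longrightarrow> x < b \<Longrightarrow> (f has_real_derivative f' x) (at x)"
  shows "\<exists>z. a < z \<and> z < b \<and> f b - f a = (b - a) * f' z"
proof -
  have "\<exists>l z. a < z \<and> z < b \<and> DERIV f z :> l \<and> f b - f a = (b - a) * l"
  proof (rule MVT[OF ab cf])
    fix x assume "a < x" "x < b"
    thus "f differentiable (at x)" using der unfolding real_differentiable_def by blast
  qed
  then obtain l z where z: "a < z" "z < b" "DERIV f z :> l" "f b - f a = (b - a) * l" by blast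
  have "l = f' z" using DERIV_unique[OF z(3) der[OF z(1,2)]] .
  thus ?thesis using z by blast
qed

lemma deriv_cont_on:
  fixes f f' :: "real \<Rightarrow> real"
  assumes der: "\<And>x. (f has_real_derivative f' x) (at x)"
  shows "continuous_on S f"
  by (rule continuous_at_imp_continuous_on) (use der DERIV_continuous in blast)

lemma lip_from_deriv:
  fixes f f' :: "real \<Rightarrow> real"
  assumes der: "\<And>x. (f has_real_derivative f' x) (at x)" and bd: "\<And>x. \<bar>f' x\<bar> \<le> B"
  shows "\<bar>f x - f y\<bar> \<le> B * \<bar>x - y\<bar>"
proof -
  have *: "\<bar>f x - f y\<bar> \<le> B * \<bar>x - y\<bar>" if xy: "x < y" for x y
  proof -
    obtain z where "x < z" "z < y" "f y - f x = (y - x) * f' z"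
      using MVT_deriv[OF xy deriv_cont_on[OF der] der] by blast
    hence "\<bar>f x - f y\<bar> = \<bar>y - x\<bar> * \<bar>f' z\<bar>" by (metis abs_minus_commute abs_mult)
    hence "\<bar>f x - f y\<bar> = (y - x) * \<bar>f' z\<bar>" using xy by simp
    also have "\<dots> \<le> (y - x) * B" using bd[of z] xy by (intro mult_left_mono) auto
    finally show ?thesis using xy by (simp add: mult.commute)
  qed
  show ?thesis
    using *[of x y] *[of y x] by (cases x y rule: linorder_cases) (auto simp: abs_minus_commute)
qed

lemma lip_from_deriv_ivl:
  fixes f f' :: "real \<Rightarrow> real"
  assumes cf: "continuous_on {a..b} f"
    and der: "\<And>x. a < x \<Longrightarrow> x < b \<Longrightarrow> (f has_real_derivative f' x) (at x)"
    and bd: "\<And>x. a < x \<Longrightarrow> x < b \<Longrightarrow> \<bar>f' x\<bar> \<le> B"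
    and x: "x \<in> {a..b}" and y: "y \<in> {a..b}"
  shows "\<bar>f x - f y\<bar> \<le> B * \<bar>x - y\<bar>"
proof -
  have *: "\<bar>f x - f y\<bar> \<le> B * \<bar>x - y\<bar>" if xy: "x < y" and "x \<in> {a..b}" "y \<in> {a..b}" for x y
  proof -
    have c: "continuous_on {x..y} f" by (rule continuous_on_subset[OF cf]) (use that in auto)
    have der': "(f has_real_derivative f' w) (at w)" if "x < w" "w < y" for w
      using der that \<open>x \<in> {a..b}\<close> \<open>y \<in> {a..b}\<close> by auto
    obtain z where "x < z" "z < y" "f y - f x = (y - x) * f' z"
      using MVT_deriv[OF xy c der'] by blast
    moreover have "a < z" "z < b" using that \<open>x < z\<close> \<open>z < y\<close> by auto
    ultimately have "\<bar>f x - f y\<bar> = \<bar>y - x\<bar> * \<bar>f' z\<bar>" by (metis abs_minus_commute abs_mult)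
    hence "\<bar>f x - f y\<bar> = (y - x) * \<bar>f' z\<bar>" using xy by simp
    also have "\<dots> \<le> (y - x) * B" using bd[OF \<open>a < z\<close> \<open>z < b\<close>] xy by (intro mult_left_mono) auto
    finally show ?thesis using xy by (simp add: mult.commute)
  qed
  show ?thesis
    using *[of x y] *[of y x] x y by (cases x y rule: linorder_cases) (auto simp: abs_minus_commute)
qed

lemma per_lip:
  fixes d e :: "real \<Rightarrow> real"
  assumes cd: "continuous_on {0..2*pi} d"
    and der: "\<And>x. 0 < x \<Longrightarrow> x < 2*pi \<Longrightarrow> (d has_real_derivative e x) (at x)"
    and bd: "\<And>x. 0 < x \<Longrightarrow> x < 2*pi \<Longrightarrow> \<bar>e x\<bar> \<le> L"
    and d0: "d 0 = d (2*pi)"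
  shows "\<bar>per d x - per d y\<bar> \<le> L * \<bar>x - y\<bar>"
proof -
  have seg: "\<bar>per d z - per d w\<bar> \<le> L * \<bar>z - w\<bar>"
    if "2*pi * of_int n \<le> z" "z \<le> 2*pi * of_int n + 2*pi" "2*pi * of_int n \<le> w" "w \<le> 2*pi * of_int n + 2*pi" for z w n
  proof -
    have "per d z = d (z - 2*pi * of_int n)" "per d w = d (w - 2*pi * of_int n)"
      using per_at2[OF _ _ d0] that by blast+
    moreover have "\<bar>d (z - 2*pi * of_int n) - d (w - 2*pi * of_int n)\<bar> \<le> L * \<bar>(z - 2*pi * of_int n) - (w - 2*pi * of_int n)\<bar>"
      by (rule lip_from_deriv_ivl[OF cd der bd]) (use that in auto)
    ultimately show ?thesis by simp
  qed
  have mult: "per d (2*pi * of_int n) = d 0" for n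
    using per_shift_int[of d 0 n] per_eq[of 0 d] by simp
  have *: "\<bar>per d x - per d y\<bar> \<le> L * \<bar>x - y\<bar>" if xy: "x \<le> y" for x y
  proof -
    define n where "n = floor (x/(2*pi))"
    define m where "m = floor (y/(2*pi))"
    have nx: "2*pi * of_int n \<le> x" "x < 2*pi * of_int n + 2*pi"
      using per_range[of x] unfolding n_def by auto
    have my: "2*pi * of_int m \<le> y" "y < 2*pi * of_int m + 2*pi"
      using per_range[of y] unfolding m_def by auto
    have "n \<le> m" unfolding n_def m_def using xy by (intro floor_mono divide_right_mono) auto
    show ?thesis
    proof (cases "n = m")
      case True thus ?thesis using seg[of n x y] nx my by auto
    next
      case False
      hence nm: "n + 1 \<le> m" using \<open>n \<le> m\<close> by simp
      hence "2*pi * of_int (n+1) \<le> 2*pi * of_int m" by simp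
      have L0: "0 \<le> L" using bd[of pi] by (smt (verit) pi_gt_zero)
      have A: "\<bar>per d x - per d (2*pi * of_int (n+1))\<bar> \<le> L * \<bar>x - 2*pi * of_int (n+1)\<bar>"
        by (rule seg[of n]) (use nx in \<open>auto simp: algebra_simps\<close>)
      have B: "\<bar>per d (2*pi * of_int m) - per d y\<bar> \<le> L * \<bar>2*pi * of_int m - y\<bar>"
        by (rule seg[of m]) (use my in \<open>auto simp: algebra_simps\<close>)
      have "\<bar>per d x - per d y\<bar> \<le> \<bar>per d x - per d (2*pi * of_int (n+1))\<bar> + \<bar>per d (2*pi * of_int m) - per d y\<bar>"
        using mult[of "n+1"] mult[of m] by simp
      also have "\<dots> \<le> L * \<bar>x - 2*pi * of_int (n+1)\<bar> + L * \<bar>2*pi * of_int m - y\<bar>" using A B by simp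
      also have "\<dots> = L * ((2*pi * of_int (n+1) - x) + (y - 2*pi * of_int m))"
        using nx my by (simp add: algebra_simps)
      also have "\<dots> \<le> L * (y - x)" using L0 \<open>2*pi * of_int (n+1) \<le> 2*pi * of_int m\<close>
        by (intro mult_left_mono) auto
      finally show ?thesis using xy by simp
    qed
  qed
  show ?thesis using *[of x y] *[of y x] by (cases "x \<le> y") (auto simp: abs_minus_commute)
qed


definition LD :: "(real \<Rightarrow> real) \<Rightarrow> (real \<Rightarrow> real) \<Rightarrow> real \<Rightarrow> real \<Rightarrow> real \<Rightarrow> bool" where
  "LD f f' a b c \<longleftrightarrow> (\<forall>x. (f has_real_derivative f' x) (at x)) \<and> (\<forall>x. \<bar>f x\<bar> \<le> a) \<and>
     (\<forall>x. \<bar>f' x\<bar> \<le> b) \<and> (\<forall>x y. \<bar>f' x - f' y\<bar> \<le> c * \<bar>x - y\<bar>)"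

lemma LD_lip: "LD f f' a b c \<Longrightarrow> \<bar>f x - f y\<bar> \<le> b * \<bar>x - y\<bar>"
  unfolding LD_def by (intro lip_from_deriv) auto

lemma LD_nonneg: "LD f f' a b c \<Longrightarrow> 0 \<le> a \<and> 0 \<le> b \<and> 0 \<le> c"
  unfolding LD_def
proof (elim conjE)
  assume "\<forall>x. \<bar>f x\<bar> \<le> a" "\<forall>x. \<bar>f' x\<bar> \<le> b" "\<forall>x y. \<bar>f' x - f' y\<bar> \<le> c * \<bar>x - y\<bar>"
  moreover from this(3) have "\<bar>f' 1 - f' 0\<bar> \<le> c" by (metis abs_one diff_zero mult.right_neutral)
  ultimately show "0 \<le> a \<and> 0 \<le> b \<and> 0 \<le> c" by (smt (verit))
qed

lemma LD_mono: "LD f f' a b c \<Longrightarrow> a \<le> a' \<Longrightarrow> b \<le> b' \<Longrightarrow> c \<le> c' \<Longrightarrow> LD f f' a' b' c'"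
  unfolding LD_def
proof (elim conjE, intro conjI allI)
  fix x y
  assume "\<forall>x y. \<bar>f' x - f' y\<bar> \<le> c * \<bar>x - y\<bar>" "c \<le> c'"
  moreover have "c * \<bar>x - y\<bar> \<le> c' * \<bar>x - y\<bar>" using \<open>c \<le> c'\<close> by (intro mult_right_mono) auto
  ultimately show "\<bar>f' x - f' y\<bar> \<le> c' * \<bar>x - y\<bar>" by (meson order_trans)
qed (meson order_trans)+

lemma LD_const: "LD (\<lambda>_. k) (\<lambda>_. 0) \<bar>k\<bar> 0 0"
  unfolding LD_def by auto

lemma LD_diff:
  assumes "LD f f' a1 b1 c1" "LD g g' a2 b2 c2"
  shows "LD (\<lambda>x. f x - g x) (\<lambda>x. f' x - g' x) (a1 + a2) (b1 + b2) (c1 + c2)"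
  unfolding LD_def
proof (intro conjI allI)
  fix x y
  show "((\<lambda>x. f x - g x) has_real_derivative f' x - g' x) (at x)"
    using assms unfolding LD_def by (auto intro!: derivative_eq_intros)
  have "\<bar>f x\<bar> \<le> a1" "\<bar>g x\<bar> \<le> a2" "\<bar>f' x\<bar> \<le> b1" "\<bar>g' x\<bar> \<le> b2"
    using assms unfolding LD_def by blast+
  thus "\<bar>f x - g x\<bar> \<le> a1 + a2" "\<bar>f' x - g' x\<bar> \<le> b1 + b2" by linarith+
  have "\<bar>f' x - f' y\<bar> \<le> c1 * \<bar>x - y\<bar>" "\<bar>g' x - g' y\<bar> \<le> c2 * \<bar>x - y\<bar>"
    using assms unfolding LD_def by blast+
  thus "\<bar>f' x - g' x - (f' y - g' y)\<bar> \<le> (c1 + c2) * \<bar>x - y\<bar>" by (simp add: distrib_right)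
qed

lemma LD_shift:
  assumes "LD f f' a b c"
  shows "LD (\<lambda>x. f (x - h)) (\<lambda>x. f' (x - h)) a b c"
  unfolding LD_def
proof (intro conjI allI)
  fix x
  have "(f has_real_derivative f' (x - h)) (at (x - h))" using assms unfolding LD_def by blast
  moreover have "((\<lambda>x. x - h) has_real_derivative 1) (at x)" by (auto intro!: derivative_eq_intros)
  ultimately have "((\<lambda>x. f (x - h)) has_real_derivative f' (x - h) * 1) (at x)"
    by (rule DERIV_chain2[where f=f and g="\<lambda>x. x - h"])
  thus "((\<lambda>x. f (x - h)) has_real_derivative f' (x - h)) (at x)" by simp
next
  fix x y
  show "\<bar>f (x - h)\<bar> \<le> a" "\<bar>f' (x - h)\<bar> \<le> b" using assms unfolding LD_def by blast+
  have "\<bar>f' (x - h) - f' (y - h)\<bar> \<le> c * \<bar>(x - h) - (y - h)\<bar>" using assms unfolding LD_def by blast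
  thus "\<bar>f' (x - h) - f' (y - h)\<bar> \<le> c * \<bar>x - y\<bar>" by simp
qed

lemma LD_mult:
  assumes F: "LD f f' a1 b1 c1" and G: "LD g g' a2 b2 c2"
  shows "LD (\<lambda>x. f x * g x) (\<lambda>x. f' x * g x + f x * g' x) (a1 * a2) (b1 * a2 + a1 * b2) (c1 * a2 + 2 * b1 * b2 + a1 * c2)"
  unfolding LD_def
proof (intro conjI allI)
  have nn: "0 \<le> a1" "0 \<le> b1" "0 \<le> c1" "0 \<le> a2" "0 \<le> b2" "0 \<le> c2" using LD_nonneg[OF F] LD_nonneg[OF G] by auto
  have f: "\<And>x. \<bar>f x\<bar> \<le> a1" "\<And>x. \<bar>f' x\<bar> \<le> b1" "\<And>x y. \<bar>f' x - f' y\<bar> \<le> c1 * \<bar>x - y\<bar>"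
    using F unfolding LD_def by blast+
  have g: "\<And>x. \<bar>g x\<bar> \<le> a2" "\<And>x. \<bar>g' x\<bar> \<le> b2" "\<And>x y. \<bar>g' x - g' y\<bar> \<le> c2 * \<bar>x - y\<bar>"
    using G unfolding LD_def by blast+
  fix x y
  show "((\<lambda>x. f x * g x) has_real_derivative f' x * g x + f x * g' x) (at x)"
    using F G unfolding LD_def by (auto intro!: derivative_eq_intros)
  show "\<bar>f x * g x\<bar> \<le> a1 * a2" unfolding abs_mult using f g nn by (intro mult_mono) auto
  show "\<bar>f' x * g x + f x * g' x\<bar> \<le> b1 * a2 + a1 * b2"
  proof -
    have "\<bar>f' x * g x\<bar> \<le> b1 * a2" unfolding abs_mult using f g nn by (intro mult_mono) auto
    moreover have "\<bar>f x * g' x\<bar> \<le> a1 * b2" unfolding abs_mult using f g nn by (intro mult_mono) auto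
    ultimately show ?thesis by (smt (verit))
  qed
  let ?d = "\<bar>x - y\<bar>"
  have lf: "\<bar>f x - f y\<bar> \<le> b1 * ?d" by (rule LD_lip[OF F])
  have lg: "\<bar>g x - g y\<bar> \<le> b2 * ?d" by (rule LD_lip[OF G])
  have e1: "f' x * g x - f' y * g y = (f' x - f' y) * g x + f' y * (g x - g y)" by (simp add: algebra_simps)
  have e2: "f x * g' x - f y * g' y = (f x - f y) * g' x + f y * (g' x - g' y)" by (simp add: algebra_simps)
  have t1: "\<bar>(f' x - f' y) * g x\<bar> \<le> (c1 * ?d) * a2" unfolding abs_mult using f g nn by (intro mult_mono) auto
  have t2: "\<bar>f' y * (g x - g y)\<bar> \<le> b1 * (b2 * ?d)" unfolding abs_mult using f lg nn by (intro mult_mono) auto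
  have t3: "\<bar>(f x - f y) * g' x\<bar> \<le> (b1 * ?d) * b2" unfolding abs_mult using lf g nn by (intro mult_mono) auto
  have t4: "\<bar>f y * (g' x - g' y)\<bar> \<le> a1 * (c2 * ?d)" unfolding abs_mult using f g nn by (intro mult_mono) auto
  have "\<bar>(f' x * g x + f x * g' x) - (f' y * g y + f y * g' y)\<bar>
      \<le> \<bar>(f' x - f' y) * g x\<bar> + \<bar>f' y * (g x - g y)\<bar> + \<bar>(f x - f y) * g' x\<bar> + \<bar>f y * (g' x - g' y)\<bar>"
    using e1 e2 by (smt (verit))
  also have "\<dots> \<le> (c1 * ?d) * a2 + b1 * (b2 * ?d) + (b1 * ?d) * b2 + a1 * (c2 * ?d)"
    using t1 t2 t3 t4 by (intro add_mono)
  also have "\<dots> = (c1 * a2 + 2 * b1 * b2 + a1 * c2) * ?d" by (simp add: algebra_simps)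
  finally show "\<bar>(f' x * g x + f x * g' x) - (f' y * g y + f y * g' y)\<bar> \<le> (c1 * a2 + 2 * b1 * b2 + a1 * c2) * ?d" .
qed

lemma LD_delta2:
  assumes F: "LD f f' a b c" and d: "0 < d"
  shows "\<bar>f (x + d) - 2 * f x + f (x - d)\<bar> \<le> 2 * c * d^2"
proof -
  define \<psi> where "\<psi> s = f (x + s) + f (x - s)" for s
  have fd: "\<And>y. (f has_real_derivative f' y) (at y)" and fl: "\<And>y z. \<bar>f' y - f' z\<bar> \<le> c * \<bar>y - z\<bar>"
    using F unfolding LD_def by blast+
  have dpsi: "(\<psi> has_real_derivative f' (x + s) - f' (x - s)) (at s)" for s
  proof -
    have a: "((\<lambda>s. f (x + s)) has_real_derivative f' (x + s) * 1) (at s)"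
      by (rule DERIV_chain2[where f=f and g="\<lambda>s. x + s", OF fd]) (auto intro!: derivative_eq_intros)
    have b: "((\<lambda>s. f (x - s)) has_real_derivative f' (x - s) * (-1)) (at s)"
      by (rule DERIV_chain2[where f=f and g="\<lambda>s. x - s", OF fd]) (auto intro!: derivative_eq_intros)
    show ?thesis unfolding \<psi>_def using DERIV_add[OF a b] by simp
  qed
  obtain z where z: "0 < z" "z < d" "\<psi> d - \<psi> 0 = (d - 0) * (f' (x + z) - f' (x - z))"
    using MVT_deriv[OF d deriv_cont_on[OF dpsi] dpsi] by blast
  define l where "l = f' (x + z) - f' (x - z)"
  have z3: "\<psi> d - \<psi> 0 = (d - 0) * l" using z(3) l_def by simp
  have "\<bar>l\<bar> \<le> c * (2 * z)" unfolding l_def using fl[of "x + z" "x - z"] z by simp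
  also have "\<dots> \<le> c * (2 * d)" using z LD_nonneg[OF F] by (intro mult_left_mono) auto
  finally have "\<bar>\<psi> d - \<psi> 0\<bar> \<le> d * (c * (2 * d))" using z3 d by (simp add: abs_mult mult_left_mono)
  thus ?thesis unfolding \<psi>_def by (simp add: power2_eq_square algebra_simps)
qed


lemma second_deriv_max:
  fixes f fd :: "real \<Rightarrow> real"
  assumes d1: "\<And>y. (f has_real_derivative fd y) (at y)"
    and d2: "(fd has_real_derivative c) (at x)"
    and mx: "\<And>y. f y \<le> f x"
  shows "c \<le> 0"
proof (rule ccontr)
  assume "\<not> c \<le> 0"
  hence c: "0 < c" by simp
  have f1x: "fd x = 0"
    by (rule DERIV_local_max[OF d1 zero_less_one]) (use mx in auto)
  obtain d where d: "d > 0" "\<And>h. h > 0 \<Longrightarrow> h < d \<Longrightarrow> fd x < fd (x + h)"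
    using DERIV_pos_inc_right[OF d2 c] by blast
  have xl: "x < x + d/2" using d by simp
  obtain z where z: "x < z" "z < x + d/2" "f (x + d/2) - f x = (x + d/2 - x) * fd z"
    using MVT_deriv[OF xl deriv_cont_on[OF d1] d1] by blast
  have "fd x < fd (x + (z - x))" using z d by (intro d(2)) auto
  hence "0 < fd z" using f1x by simp
  hence "0 < (x + d/2 - x) * fd z" using d by (intro mult_pos_pos) auto
  hence "f x < f (x + d/2)" using z(3) by linarith
  thus False using mx[of "x + d/2"] by simp
qed

lemma left_max_deriv:
  fixes g :: "real \<Rightarrow> real"
  assumes d: "(g has_real_derivative c) (at t)" and at: "a < t"
    and mx: "\<And>s. a \<le> s \<Longrightarrow> s \<le> t \<Longrightarrow> g s \<le> g t"
  shows "0 \<le> c"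
proof (rule ccontr)
  assume "\<not> 0 \<le> c"
  hence "c < 0" by simp
  then obtain e where e: "e > 0" "\<And>h. h > 0 \<Longrightarrow> h < e \<Longrightarrow> g t < g (t - h)"
    using DERIV_neg_dec_left[OF d] by blast
  define h where "h = min e (t - a) / 2"
  have h: "h > 0" "h < e" "h \<le> t - a" using e at unfolding h_def by auto
  have "g t < g (t - h)" using e(2) h by simp
  moreover have "g (t - h) \<le> g t" using h by (intro mx) auto
  ultimately show False by simp
qed

lemma max_principle_upper:
  fixes W Wx Wxx Wt G :: "real \<Rightarrow> real \<Rightarrow> real"
  assumes T: "0 < T" and \<alpha>: "0 < \<alpha>"
    and cont: "continuous_on ({0..2*pi} \<times> {0..T}) (\<lambda>(x, t). W x t)"
    and perW: "\<And>x t. W x t = per (\<lambda>y. W y t) x"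
    and d1: "\<And>x t. 0 < t \<Longrightarrow> t < T \<Longrightarrow> ((\<lambda>y. W y t) has_real_derivative Wx x t) (at x)"
    and d2: "\<And>x t. 0 < t \<Longrightarrow> t < T \<Longrightarrow> ((\<lambda>y. Wx y t) has_real_derivative Wxx x t) (at x)"
    and dt: "\<And>x t. 0 < t \<Longrightarrow> t < T \<Longrightarrow> ((\<lambda>s. W x s) has_real_derivative Wt x t) (at t)"
    and eq: "\<And>x t. 0 < t \<Longrightarrow> t < T \<Longrightarrow> Wt x t - \<alpha> * Wxx x t = G x t"
    and Gb: "\<And>x t. 0 < t \<Longrightarrow> t < T \<Longrightarrow> G x t \<le> S"
    and W0: "\<And>x. 0 \<le> x \<Longrightarrow> x \<le> 2*pi \<Longrightarrow> W x 0 \<le> B"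
    and x: "0 \<le> x" "x \<le> 2*pi" and t: "0 \<le> t" "t < T"
  shows "W x t \<le> B + S * t"
proof (cases "t = 0")
  case True thus ?thesis using W0 x by simp
next
  case False
  hence t1: "0 < t" using t by simp
  have main: "W x t \<le> B + (S + \<epsilon>) * t" if \<epsilon>: "0 < \<epsilon>" for \<epsilon>
  proof -
    define Z where "Z p = W (fst p) (snd p) - B - (S + \<epsilon>) * snd p" for p :: "real \<times> real"
    define K where "K = {0..2*pi} \<times> {0..t}"
    have K: "compact K" "K \<noteq> {}" unfolding K_def using t1 by (auto intro!: compact_Times)
    have sub: "K \<subseteq> {0..2*pi} \<times> {0..T}" unfolding K_def using t by auto
    have "continuous_on K (\<lambda>p. W (fst p) (snd p))"
      using continuous_on_subset[OF cont sub] by (simp add: case_prod_beta)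
    hence "continuous_on K Z" unfolding Z_def by (intro continuous_intros)
    then obtain p where p: "p \<in> K" "\<And>q. q \<in> K \<Longrightarrow> Z q \<le> Z p"
      using continuous_attains_sup[OF K] by blast
    obtain xs ts where pe: "p = (xs, ts)" by (cases p)
    have xs: "0 \<le> xs" "xs \<le> 2*pi" and ts: "0 \<le> ts" "ts \<le> t" using p(1) unfolding pe K_def by auto
    have "Z p \<le> 0"
    proof (rule ccontr)
      assume pos: "\<not> Z p \<le> 0"
      have "ts \<noteq> 0"
      proof
        assume "ts = 0"
        hence "Z p = W xs 0 - B" unfolding Z_def pe by simp
        thus False using W0[OF xs] pos by simp
      qed
      hence ts0: "0 < ts" "ts < T" using ts t by auto
      have "Wxx xs ts \<le> 0"
      proof (rule second_deriv_max[where f="\<lambda>y. W y ts" and fd="\<lambda>y. Wx y ts"])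
        show "((\<lambda>y. W y ts) has_real_derivative Wx y ts) (at y)" for y using d1[OF ts0] .
        show "((\<lambda>y. Wx y ts) has_real_derivative Wxx xs ts) (at xs)" using d2[OF ts0] .
        show "W y ts \<le> W xs ts" for y
        proof -
          obtain y' n where y': "0 \<le> y'" "y' < 2*pi" "per (\<lambda>y. W y ts) y = W y' ts"
            using per_exists[of "\<lambda>y. W y ts" y] by blast
          have "Z (y', ts) \<le> Z p" using p(2)[of "(y', ts)"] y' ts unfolding K_def by auto
          hence "W y' ts \<le> W xs ts" unfolding Z_def pe by simp
          thus ?thesis using y' perW[of y ts] by simp
        qed
      qed
      moreover have "0 \<le> Wt xs ts - (S + \<epsilon>)"
      proof (rule left_max_deriv[where g="\<lambda>s. W xs s - B - (S + \<epsilon>) * s" and a=0])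
        show "((\<lambda>s. W xs s - B - (S + \<epsilon>) * s) has_real_derivative Wt xs ts - (S + \<epsilon>)) (at ts)"
          using dt[OF ts0, of xs] by (auto intro!: derivative_eq_intros)
        show "0 < ts" by (fact ts0(1))
        show "W xs s - B - (S + \<epsilon>) * s \<le> W xs ts - B - (S + \<epsilon>) * ts" if "0 \<le> s" "s \<le> ts" for s
          using p(2)[of "(xs, s)"] that xs ts unfolding K_def Z_def pe by auto
      qed
      ultimately have "G xs ts \<ge> S + \<epsilon>" using eq[OF ts0, of xs] \<alpha>
        by (smt (verit) mult_nonneg_nonpos)
      thus False using Gb[OF ts0, of xs] \<epsilon> by simp
    qed
    moreover have "Z (x, t) \<le> Z p" using p(2)[of "(x, t)"] x t unfolding K_def by auto
    ultimately show ?thesis unfolding Z_def by simp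
  qed
  show ?thesis
  proof (rule field_le_epsilon)
    fix e :: real assume e: "0 < e"
    have "W x t \<le> B + (S + e / t) * t" using main[of "e/t"] e t1 by simp
    also have "\<dots> = B + S * t + e" using t1 by (simp add: algebra_simps)
    finally show "W x t \<le> B + S * t + e" .
  qed
qed

lemma max_principle:
  fixes W Wx Wxx Wt G :: "real \<Rightarrow> real \<Rightarrow> real"
  assumes T: "0 < T" and \<alpha>: "0 < \<alpha>"
    and cont: "continuous_on ({0..2*pi} \<times> {0..T}) (\<lambda>(x, t). W x t)"
    and perW: "\<And>x t. W x t = per (\<lambda>y. W y t) x"
    and d1: "\<And>x t. 0 < t \<Longrightarrow> t < T \<Longrightarrow> ((\<lambda>y. W y t) has_real_derivative Wx x t) (at x)"
    and d2: "\<And>x t. 0 < t \<Longrightarrow> t < T \<Longrightarrow> ((\<lambda>y. Wx y t) has_real_derivative Wxx x t) (at x)"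
    and dt: "\<And>x t. 0 < t \<Longrightarrow> t < T \<Longrightarrow> ((\<lambda>s. W x s) has_real_derivative Wt x t) (at t)"
    and eq: "\<And>x t. 0 < t \<Longrightarrow> t < T \<Longrightarrow> Wt x t - \<alpha> * Wxx x t = G x t"
    and Gb: "\<And>x t. 0 < t \<Longrightarrow> t < T \<Longrightarrow> \<bar>G x t\<bar> \<le> S"
    and W0: "\<And>x. 0 \<le> x \<Longrightarrow> x \<le> 2*pi \<Longrightarrow> \<bar>W x 0\<bar> \<le> B"
    and x: "0 \<le> x" "x \<le> 2*pi" and t: "0 \<le> t" "t < T"
  shows "\<bar>W x t\<bar> \<le> B + S * t"
proof -
  have "W x t \<le> B + S * t"
    by (rule max_principle_upper[OF T \<alpha> cont perW d1 d2 dt eq _ _ x t])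
       (use Gb W0 in \<open>auto simp: abs_le_iff\<close>)
  moreover have "- W x t \<le> B + S * t"
  proof (rule max_principle_upper[OF T \<alpha>, where W="\<lambda>x t. - W x t" and Wx="\<lambda>x t. - Wx x t"
        and Wxx="\<lambda>x t. - Wxx x t" and Wt="\<lambda>x t. - Wt x t" and G="\<lambda>x t. - G x t", OF _ _ _ _ _ _ _ _ x t])
    show "continuous_on ({0..2*pi} \<times> {0..T}) (\<lambda>(x, t). - W x t)"
      using continuous_on_minus[OF cont] by (simp add: case_prod_beta)
    show "- W x t = per (\<lambda>y. - W y t) x" for x t using perW[of x t] by (simp add: per_def)
    show "((\<lambda>y. - W y t) has_real_derivative - Wx x t) (at x)" if "0 < t" "t < T" for x t
      using d1[OF that] by (auto intro!: derivative_eq_intros)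
    show "((\<lambda>y. - Wx y t) has_real_derivative - Wxx x t) (at x)" if "0 < t" "t < T" for x t
      using d2[OF that] by (auto intro!: derivative_eq_intros)
    show "((\<lambda>s. - W x s) has_real_derivative - Wt x t) (at t)" if "0 < t" "t < T" for x t
      using dt[OF that] by (auto intro!: derivative_eq_intros)
    show "- Wt x t - \<alpha> * - Wxx x t = - G x t" if "0 < t" "t < T" for x t
      using eq[OF that, of x] by simp
    show "- G x t \<le> S" if "0 < t" "t < T" for x t using Gb[OF that, of x] by (simp add: abs_le_iff)
    show "- W x 0 \<le> B" if "0 \<le> x" "x \<le> 2*pi" for x using W0[OF that] by (simp add: abs_le_iff)
  qed
  ultimately show ?thesis by (simp add: abs_le_iff)
qed

lemma d2_bound:
  fixes f fd :: "real \<Rightarrow> real"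
  assumes d1: "\<And>y. (f has_real_derivative fd y) (at y)"
    and d2: "(fd has_real_derivative c) (at x)"
    and bd: "\<And>d. 0 < d \<Longrightarrow> d < e \<Longrightarrow> \<bar>f (x + d) - 2 * f x + f (x - d)\<bar> \<le> K * d^2"
    and e: "0 < e"
  shows "\<bar>c\<bar> \<le> K"
proof -
  define f0 where "f0 d = f (x + d) - 2 * f x + f (x - d)" for d
  define f0' where "f0' d = fd (x + d) - fd (x - d)" for d
  have df0: "(f0 has_real_derivative f0' d) (at d)" for d
  proof -
    have a: "((\<lambda>s. f (x + s)) has_real_derivative fd (x + d) * 1) (at d)"
      by (rule DERIV_chain2[where f=f and g="\<lambda>s. x + s", OF d1]) (auto intro!: derivative_eq_intros)
    have b: "((\<lambda>s. f (x - s)) has_real_derivative fd (x - d) * (-1)) (at d)"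
      by (rule DERIV_chain2[where f=f and g="\<lambda>s. x - s", OF d1]) (auto intro!: derivative_eq_intros)
    show ?thesis unfolding f0_def f0'_def using DERIV_add[OF DERIV_diff[OF a DERIV_const] b] by simp
  qed
  have cf: "continuous_on UNIV f" by (rule deriv_cont_on[OF d1])
  have "(f0 \<longlongrightarrow> f0 0) (at 0)" using DERIV_continuous[OF df0] by (simp add: isCont_def)
  hence f00: "(f0 \<longlongrightarrow> 0) (at_right 0)" unfolding f0_def filterlim_at_split by simp
  have g00: "((\<lambda>d::real. d^2) \<longlongrightarrow> 0) (at_right 0)"
    by (rule tendsto_eq_intros refl)+ simp
  have L1: "((\<lambda>h. (fd (x + h) - fd x) / h) \<longlongrightarrow> c) (at 0)" using DERIV_D[OF d2] .
  have dm: "((\<lambda>s. fd (x - s)) has_real_derivative c * (-1)) (at 0)"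
    by (rule DERIV_chain2[where f=fd and g="\<lambda>s. x - s"]) (use d2 in \<open>auto intro!: derivative_eq_intros\<close>)
  have L2: "((\<lambda>h. (fd (x - h) - fd x) / h) \<longlongrightarrow> - c) (at 0)" using DERIV_D[OF dm] by simp
  have "((\<lambda>h. ((fd (x + h) - fd x) / h - (fd (x - h) - fd x) / h) / 2) \<longlongrightarrow> (c - - c) / 2) (at 0)"
    by (intro tendsto_intros L1 L2) simp
  hence L: "((\<lambda>h. ((fd (x + h) - fd x) / h - (fd (x - h) - fd x) / h) / 2) \<longlongrightarrow> c) (at_right 0)"
    unfolding filterlim_at_split by simp
  have "((\<lambda>d. f0' d / (2 * d)) \<longlongrightarrow> c) (at_right 0)"
  proof (rule Lim_transform_eventually[OF L])
    show "\<forall>\<^sub>F h in at_right 0. ((fd (x + h) - fd x) / h - (fd (x - h) - fd x) / h) / 2 = f0' h / (2 * h)"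
      using eventually_at_right_less[of 0] by eventually_elim (simp add: f0'_def field_simps)
  qed
  hence lim: "((\<lambda>d. f0 d / d^2) \<longlongrightarrow> c) (at_right 0)"
  proof (intro lhopital_right_0[OF f00 g00])
    show "\<forall>\<^sub>F d in at_right 0. d^2 \<noteq> (0::real)" "\<forall>\<^sub>F d in at_right 0. 2 * d \<noteq> (0::real)"
      using eventually_at_right_less[of 0] by (auto elim!: eventually_mono)
    show "\<forall>\<^sub>F d in at_right 0. DERIV f0 d :> f0' d" by (simp add: df0)
    show "\<forall>\<^sub>F d in at_right 0. ((\<lambda>d. d^2) has_real_derivative 2 * d) (at d)"
      by (rule always_eventually) (auto intro!: derivative_eq_intros)
  qed
  have "((\<lambda>d. \<bar>f0 d / d^2\<bar>) \<longlongrightarrow> \<bar>c\<bar>) (at_right 0)" by (rule tendsto_rabs[OF lim])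
  moreover have "\<forall>\<^sub>F d in at_right 0. \<bar>f0 d / d^2\<bar> \<le> K"
  proof -
    have "\<forall>\<^sub>F d in at_right 0. 0 < d \<and> d < e" unfolding eventually_at_right[OF e] using e by auto
    thus ?thesis
    proof eventually_elim
      case (elim d)
      hence "\<bar>f0 d\<bar> \<le> K * d^2" using bd unfolding f0_def by blast
      thus ?case using elim by (simp add: abs_divide divide_le_eq)
    qed
  qed
  ultimately show ?thesis by (rule tendsto_upperbound) simp
qed


lemma eq_on_closed_ivl:
  fixes f g :: "real \<Rightarrow> real"
  assumes ab: "a < b" and cf: "continuous_on {a..b} f" and cg: "continuous_on {a..b} g"
    and eq: "\<And>x. a < x \<Longrightarrow> x < b \<Longrightarrow> f x = g x" and x: "x \<in> {a..b}"
  shows "f x = g x"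
proof -
  have cl: "closure {a<..<b} = {a..b}" using ab by simp
  have c: "continuous_on (closure {a<..<b}) (\<lambda>x. f x - g x)"
    unfolding cl by (intro continuous_intros cf cg)
  have x': "x \<in> closure {a<..<b}" using x cl by simp
  have "f x - g x \<le> 0" by (rule continuous_le_on_closure[OF c x']) (use eq in auto)
  moreover have "f x - g x \<ge> 0" by (rule continuous_ge_on_closure[OF c x']) (use eq in auto)
  ultimately show ?thesis by simp
qed

lemma cont_slice_x:
  assumes "continuous_on ({a..b} \<times> {c..d}) (\<lambda>(x, t). v x t)" "t \<in> {c..d}"
  shows "continuous_on {a..b} (\<lambda>x. v x t)"
proof -
  have "continuous_on {a..b} (\<lambda>x. (\<lambda>(x, t). v x t) (x, t))"
    by (rule continuous_on_compose2[OF assms(1)]) (use assms(2) in \<open>auto intro!: continuous_intros\<close>)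
  thus ?thesis by simp
qed

lemma cont_slice_t:
  assumes "continuous_on ({a..b} \<times> {c..d}) (\<lambda>(x, t). v x t)" "x \<in> {a..b}"
  shows "continuous_on {c..d} (\<lambda>t. v x t)"
proof -
  have "continuous_on {c..d} (\<lambda>t. (\<lambda>(x, t). v x t) (x, t))"
    by (rule continuous_on_compose2[OF assms(1)]) (use assms(2) in \<open>auto intro!: continuous_intros\<close>)
  thus ?thesis by simp
qed

lemma bdry_time_deriv:
  fixes v vt :: "real \<Rightarrow> real \<Rightarrow> real"
  assumes cv: "continuous_on ({0..2*pi} \<times> {0..T}) (\<lambda>(x, t). v x t)"
    and cvt: "continuous_on ({0..2*pi} \<times> {0..T}) (\<lambda>(x, t). vt x t)"
    and dt: "\<And>x t. 0 < x \<Longrightarrow> x < 2*pi \<Longrightarrow> 0 < t \<Longrightarrow> t < T \<Longrightarrow> ((\<lambda>s. v x s) has_real_derivative vt x t) (at t)"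
    and x0: "x0 \<in> {0..2*pi}" and t: "0 < t" "t < T"
  shows "((\<lambda>s. v x0 s) has_real_derivative vt x0 t) (at t)"
proof -
  define a where "a = t / 2"
  define b where "b = (t + T) / 2"
  have ab: "0 < a" "a < t" "t < b" "b < T" using t unfolding a_def b_def by auto
  have sub: "{0..2*pi} \<times> {a..s} \<subseteq> {0..2*pi} \<times> {0..T}" if "s \<in> {a..b}" for s
    using that ab by auto
  have rep: "v x s = v x a + integral {a..s} (\<lambda>r. vt x r)" if x: "x \<in> {0..2*pi}" and s: "s \<in> {a..b}" for x s
  proof -
    have repi: "v x s = v x a + integral {a..s} (\<lambda>r. vt x r)" if x: "0 < x" "x < 2*pi" for x
    proof -
      have "((\<lambda>r. vt x r) has_integral (v x s - v x a)) {a..s}"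
      proof (rule fundamental_theorem_of_calculus_interior)
        show "a \<le> s" using s by simp
        show "continuous_on {a..s} (\<lambda>r. v x r)"
          by (rule continuous_on_subset[OF cont_slice_t[OF cv]]) (use x s ab in auto)
        show "((\<lambda>r. v x r) has_vector_derivative vt x r) (at r)" if "r \<in> {a<..<s}" for r
          using dt[OF x, of r] that s ab by (simp add: has_real_derivative_iff_has_vector_derivative)
      qed
      thus ?thesis by (simp add: integral_unique)
    qed
    have c1: "continuous_on {0..2*pi} (\<lambda>x. v x s)" by (rule cont_slice_x[OF cv]) (use s ab in auto)
    have "continuous_on {0..2*pi} (\<lambda>x. integral (cbox a s) (\<lambda>r. vt x r))"
      by (rule integral_continuous_on_param) (use continuous_on_subset[OF cvt sub[OF s]] in simp)
    hence c2: "continuous_on {0..2*pi} (\<lambda>x. v x a + integral {a..s} (\<lambda>r. vt x r))"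
      using cont_slice_x[OF cv, of a] ab by (auto intro!: continuous_intros simp: cbox_interval)
    show ?thesis by (rule eq_on_closed_ivl[OF _ c1 c2 repi x]) auto
  qed
  have cvt0: "continuous_on {a..b} (\<lambda>r. vt x0 r)"
    by (rule continuous_on_subset[OF cont_slice_t[OF cvt x0]]) (use ab in auto)
  have tin: "t \<in> {a..b}" using ab by simp
  have "((\<lambda>s. v x0 a + integral {a..s} (\<lambda>r. vt x0 r)) has_real_derivative vt x0 t) (at t within {a..b})"
    using integral_has_real_derivative[OF cvt0 tin] by (auto intro!: derivative_eq_intros)
  hence "((\<lambda>s. v x0 s) has_real_derivative vt x0 t) (at t within {a..b})"
  proof (rule has_field_derivative_transform_within[OF _ zero_less_one tin])
    show "v x0 a + integral {a..s} (\<lambda>r. vt x0 r) = v x0 s" if "s \<in> {a..b}" for s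
      using rep[OF x0 that] by simp
  qed
  thus ?thesis using at_within_Icc_at[OF ab(2,3)] by simp
qed

lemma per_cont_strip:
  fixes v :: "real \<Rightarrow> real \<Rightarrow> real"
  assumes cv: "continuous_on ({0..2*pi} \<times> {0..T}) (\<lambda>(x, t). v x t)"
    and bc: "\<And>t. 0 \<le> t \<Longrightarrow> t \<le> T \<Longrightarrow> v 0 t = v (2*pi) t"
  shows "continuous_on ({2*pi * of_int n..2*pi * of_int n + 2*pi} \<times> {0..T}) (\<lambda>(x, t). per (\<lambda>y. v y t) x)"
proof -
  let ?S = "{2*pi * of_int n..2*pi * of_int n + 2*pi} \<times> {0..T}"
  have "continuous_on ?S (\<lambda>p. (\<lambda>(x, t). v x t) ((\<lambda>(x, t). (x - 2*pi * of_int n, t)) p))"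
  proof (rule continuous_on_compose2[OF cv])
    show "continuous_on ?S (\<lambda>(x, t). (x - 2*pi * of_int n, t))"
      by (auto simp: case_prod_beta intro!: continuous_intros)
    show "(\<lambda>(x, t). (x - 2*pi * of_int n, t)) ` ?S \<subseteq> {0..2*pi} \<times> {0..T}" by auto
  qed
  moreover have "(\<lambda>p. (\<lambda>(x, t). v x t) ((\<lambda>(x, t). (x - 2*pi * of_int n, t)) p)) p = (\<lambda>(x, t). per (\<lambda>y. v y t) x) p"
    if "p \<in> ?S" for p
  proof -
    obtain x t where p: "p = (x, t)" by (cases p)
    have "per (\<lambda>y. v y t) x = v (x - 2*pi * of_int n) t"
      by (rule per_at2) (use that bc p in auto)
    thus ?thesis using p by simp
  qed
  ultimately show ?thesis using continuous_on_cong by (smt (verit, best))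
qed

lemma per_cont_big:
  fixes v :: "real \<Rightarrow> real \<Rightarrow> real"
  assumes cv: "continuous_on ({0..2*pi} \<times> {0..T}) (\<lambda>(x, t). v x t)"
    and bc: "\<And>t. 0 \<le> t \<Longrightarrow> t \<le> T \<Longrightarrow> v 0 t = v (2*pi) t"
  shows "continuous_on ({-2*pi..4*pi} \<times> {0..T}) (\<lambda>(x, t). per (\<lambda>y. v y t) x)"
proof -
  have A: "continuous_on ({-2*pi..0} \<times> {0..T}) (\<lambda>(x, t). per (\<lambda>y. v y t) x)"
    using per_cont_strip[OF cv bc, of "-1"] by simp
  have B: "continuous_on ({0..2*pi} \<times> {0..T}) (\<lambda>(x, t). per (\<lambda>y. v y t) x)"
    using per_cont_strip[OF cv bc, of 0] by simp
  have C: "continuous_on ({2*pi..4*pi} \<times> {0..T}) (\<lambda>(x, t). per (\<lambda>y. v y t) x)"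
    using per_cont_strip[OF cv bc, of 1] by simp
  have "continuous_on ({-2*pi..0} \<times> {0..T} \<union> {0..2*pi} \<times> {0..T} \<union> {2*pi..4*pi} \<times> {0..T}) (\<lambda>(x, t). per (\<lambda>y. v y t) x)"
    by (intro continuous_on_closed_Un A B C closed_Times closed_Un) auto
  moreover have "{-2*pi..0} \<times> {0..T} \<union> {0..2*pi} \<times> {0..T} \<union> {2*pi..4*pi} \<times> {0..T} = {-2*pi..4*pi} \<times> {0..T}"
    using pi_gt_zero by auto
  ultimately show ?thesis by simp
qed


lemma per_LD:
  fixes f d e :: "real \<Rightarrow> real"
  assumes cf: "continuous_on {0..2*pi} f" and cd: "continuous_on {0..2*pi} d"
    and der: "\<And>x. 0 < x \<Longrightarrow> x < 2*pi \<Longrightarrow> (f has_real_derivative d x) (at x)"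
    and der2: "\<And>x. 0 < x \<Longrightarrow> x < 2*pi \<Longrightarrow> (d has_real_derivative e x) (at x)"
    and f0: "f 0 = f (2*pi)" and d0: "d 0 = d (2*pi)"
    and ba: "\<And>x. 0 \<le> x \<Longrightarrow> x \<le> 2*pi \<Longrightarrow> \<bar>f x\<bar> \<le> a"
    and bb: "\<And>x. 0 \<le> x \<Longrightarrow> x \<le> 2*pi \<Longrightarrow> \<bar>d x\<bar> \<le> b"
    and bc: "\<And>x. 0 < x \<Longrightarrow> x < 2*pi \<Longrightarrow> \<bar>e x\<bar> \<le> c"
  shows "LD (per f) (per d) a b c"
  unfolding LD_def
proof (intro conjI allI)
  fix x y
  show "(per f has_real_derivative per d x) (at x)" by (rule per_deriv[OF cf cd der f0 d0])
  show "\<bar>per f x\<bar> \<le> a" by (rule per_bound) (use ba in auto)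
  show "\<bar>per d x\<bar> \<le> b" by (rule per_bound) (use bb in auto)
  show "\<bar>per d x - per d y\<bar> \<le> c * \<bar>x - y\<bar>" by (rule per_lip[OF cd der2 bc d0])
qed

lemma within_to_at:
  assumes "(f has_real_derivative D) (at x within {a..b})" "a < x" "x < b"
  shows "(f has_real_derivative D) (at x)"
  using assms at_within_Icc_at by metis

lemma phi_facts:
  fixes \<phi> \<phi>1 \<phi>2 :: "real \<Rightarrow> real"
  assumes h: "0 < h" "h < 2*pi"
    and \<phi>_d1: "\<And>x. x \<in> {-h..2*pi} \<Longrightarrow> (\<phi> has_real_derivative \<phi>1 x) (at x within {-h..2*pi})"
    and \<phi>_d2: "\<And>x. x \<in> {-h..2*pi} \<Longrightarrow> (\<phi>1 has_real_derivative \<phi>2 x) (at x within {-h..2*pi})"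
    and \<phi>_per: "\<And>x. x \<in> {-h..0} \<Longrightarrow> \<phi> x = \<phi> (x + 2*pi)"
  shows "\<phi> 0 = \<phi> (2*pi)" "\<phi>1 0 = \<phi>1 (2*pi)"
    "continuous_on {0..2*pi} \<phi>" "continuous_on {0..2*pi} \<phi>1"
    "\<And>x. 0 < x \<Longrightarrow> x < 2*pi \<Longrightarrow> (\<phi> has_real_derivative \<phi>1 x) (at x)"
    "\<And>x. 0 < x \<Longrightarrow> x < 2*pi \<Longrightarrow> (\<phi>1 has_real_derivative \<phi>2 x) (at x)"
proof -
  show "\<phi> 0 = \<phi> (2*pi)" using \<phi>_per[of 0] h by simp
  have c0: "continuous_on {-h..2*pi} \<phi>" by (rule DERIV_continuous_on[OF \<phi>_d1])
  have c1: "continuous_on {-h..2*pi} \<phi>1" by (rule DERIV_continuous_on[OF \<phi>_d2])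
  show "continuous_on {0..2*pi} \<phi>" by (rule continuous_on_subset[OF c0]) (use h in auto)
  show "continuous_on {0..2*pi} \<phi>1" by (rule continuous_on_subset[OF c1]) (use h in auto)
  show "(\<phi> has_real_derivative \<phi>1 x) (at x)" if "0 < x" "x < 2*pi" for x
    by (rule within_to_at[OF \<phi>_d1]) (use that h in auto)
  show "(\<phi>1 has_real_derivative \<phi>2 x) (at x)" if "0 < x" "x < 2*pi" for x
    by (rule within_to_at[OF \<phi>_d2]) (use that h in auto)
  have A: "(\<phi> has_real_derivative \<phi>1 0) (at 0 within {-h..0})"
  proof -
    have "(\<phi> has_real_derivative \<phi>1 0) (at 0)" by (rule within_to_at[OF \<phi>_d1]) (use h in auto)
    thus ?thesis by (rule has_field_derivative_at_within)
  qed
  have B: "(\<phi> has_real_derivative \<phi>1 (2*pi)) (at 0 within {-h..0})"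
  proof -
    have "(\<phi> has_real_derivative \<phi>1 (2*pi)) (at (0 + 2*pi) within {-h..2*pi})"
      using \<phi>_d1[of "2*pi"] h by simp
    moreover have "(\<lambda>x. x + 2*pi) ` {-h..0} \<subseteq> {-h..2*pi}" using h by auto
    ultimately have "(\<phi> has_real_derivative \<phi>1 (2*pi)) (at (0 + 2*pi) within (\<lambda>x. x + 2*pi) ` {-h..0})"
      by (rule DERIV_subset)
    moreover have "((\<lambda>x. x + 2*pi) has_real_derivative 1) (at 0 within {-h..0})"
      by (auto intro!: derivative_eq_intros)
    ultimately have "((\<phi> \<circ> (\<lambda>x. x + 2*pi)) has_real_derivative \<phi>1 (2*pi) * 1) (at 0 within {-h..0})"
      by (rule DERIV_image_chain)
    hence D: "((\<lambda>x. \<phi> (x + 2*pi)) has_real_derivative \<phi>1 (2*pi)) (at 0 within {-h..0})"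
      by (simp add: o_def)
    have "0 \<in> {-h..0}" using h by simp
    from has_field_derivative_transform_within[OF D zero_less_one this]
    show ?thesis using \<phi>_per by (metis)
  qed
  have ntl: "\<not> trivial_limit (at (0::real) within {-h..0})"
    using h by (simp add: at_within_Icc_at_left)
  show "\<phi>1 0 = \<phi>1 (2*pi)"
    using tendsto_unique[OF ntl A[unfolded has_field_derivative_iff] B[unfolded has_field_derivative_iff]] .
qed


definition red :: "real \<Rightarrow> real" where "red x = x - 2*pi * of_int (floor (x/(2*pi)))"

lemma per_red: "per f x = f (red x)" by (simp add: per_def red_def)
lemma red_range: "0 \<le> red x" "red x < 2*pi" using per_range[of x] by (simp_all add: red_def)

lemma per_per: "per (per f) x = per f x"
  using per_eq[of "red x" f] red_range[of x] by (simp add: per_red)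

lemma shifted_per:
  assumes h: "0 < h" "h < 2*pi" and x: "0 \<le> x" "x \<le> 2*pi"
  shows "shifted h w x t = per (\<lambda>y. w y t) (x - h)"
proof (cases "x - h < 0")
  case True
  have "per (\<lambda>y. w y t) (x - h) = w (x - h - 2*pi * of_int (-1)) t"
    by (rule per_at) (use True h x in auto)
  thus ?thesis using True by (simp add: shifted_def)
next
  case False
  have "per (\<lambda>y. w y t) (x - h) = w (x - h - 2*pi * of_int 0) t"
    by (rule per_at) (use False h x in auto)
  thus ?thesis using False by (simp add: shifted_def)
qed

lemma Fop_per:
  assumes h: "0 < h" "h < 2*pi" and bc: "w 0 t = w (2*pi) t"
  shows "per (\<lambda>x. Fop k h w x t) x = per (\<lambda>y. w y t) x * (per k x * per (\<lambda>y. w y t) (x - h) - fterm k h w t)"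
proof -
  obtain y n where y: "0 \<le> y" "y < 2*pi" "per (\<lambda>x. Fop k h w x t) x = Fop k h w y t" and x: "x = y + 2*pi * of_int n"
    using per_exists[of "\<lambda>x. Fop k h w x t" x] by blast
  have "per (\<lambda>y. w y t) x = w y t" using x y per_shift_int[of "\<lambda>y. w y t" y n] per_eq[of y] by simp
  moreover have "per k x = k y" using x y per_shift_int[of k y n] per_eq[of y] by simp
  moreover have "per (\<lambda>y. w y t) (x - h) = shifted h w y t"
    using x per_shift_int[of "\<lambda>y. w y t" "y - h" n] shifted_per[OF h, of y w t] y by (simp add: algebra_simps)
  ultimately show ?thesis using y(3) by (simp add: Fop_def)
qed

lemma Fop_bc:
  assumes h: "0 < h" "h < 2*pi" and bc: "w 0 t = w (2*pi) t" and k0: "k 0 = k (2*pi)"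
  shows "Fop k h w 0 t = Fop k h w (2*pi) t"
  using h bc k0 by (simp add: Fop_def shifted_def)

lemma fterm_bound:
  assumes h: "0 < h" "h < 2*pi" and bc: "w 0 t = w (2*pi) t"
    and kb: "\<And>x. 0 \<le> x \<Longrightarrow> x \<le> 2*pi \<Longrightarrow> \<bar>k x\<bar> \<le> K"
    and wb: "\<And>x. \<bar>per (\<lambda>y. w y t) x\<bar> \<le> R" and K: "0 \<le> K" and R: "0 \<le> R"
  shows "\<bar>fterm k h w t\<bar> \<le> 2*pi * K * R^2"
proof (cases "(\<lambda>x. k x * w x t * shifted h w x t) integrable_on {0..2*pi}")
  case False thus ?thesis using K R by (simp add: fterm_def not_integrable_integral)
next
  case True
  have bd: "norm (k x * w x t * shifted h w x t) \<le> K * R * R" if "x \<in> cbox 0 (2*pi)" for x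
  proof -
    have x: "0 \<le> x" "x \<le> 2*pi" using that by auto
    have "w x t = per (\<lambda>y. w y t) x" using per_eq2[OF x, of "\<lambda>y. w y t"] bc by simp
    hence "\<bar>w x t\<bar> \<le> R" using wb by simp
    moreover have "\<bar>shifted h w x t\<bar> \<le> R" using shifted_per[OF h x] wb by simp
    ultimately show ?thesis using kb[OF x] K R by (simp add: abs_mult mult_mono')
  qed
  have I: "((\<lambda>x. k x * w x t * shifted h w x t) has_integral fterm k h w t) (cbox 0 (2*pi))"
    using True by (simp add: cbox_interval fterm_def integrable_integral)
  have KRR: "0 \<le> K * R * R" using K R by simp
  from has_integral_bound[OF KRR I bd]
  show ?thesis by (simp add: cbox_interval power2_eq_square mult_ac)
qed

lemma arith_G:
  fixes K R F :: real
  assumes K: "0 \<le> K" and R: "1 \<le> R" and F: "F \<le> 8 * K * R^2" and F0: "0 \<le> F"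
  shows "R * (K * R + F) \<le> 32 * K * R^3"
    "R * (K * R + F) + R * ((K * R + K * R) + 0) \<le> 32 * K * R^3"
    "R * (K * R + F) + 2 * R * ((K * R + K * R) + 0) + R * ((K * R + 2 * K * R + K * R) + 0) \<le> 32 * K * R^3"
proof -
  have r23: "R^2 \<le> R^3" using R by (simp add: power_increasing)
  have a: "K * R^2 \<le> K * R^3" by (intro mult_left_mono r23 K)
  have b: "R * F \<le> 8 * K * R^3"
  proof -
    have "R * F \<le> R * (8 * K * R^2)" using F R by (intro mult_left_mono) auto
    thus ?thesis by (simp add: power2_eq_square power3_eq_cube algebra_simps)
  qed
  define X where "X = R * (K * R)"
  have c: "X \<le> K * R^3" using a unfolding X_def by (simp add: power2_eq_square algebra_simps)
  have kr3: "0 \<le> K * R^3" using K R by simp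
  have e1: "R * (K * R + F) = X + R * F" unfolding X_def by (simp add: algebra_simps)
  have e2: "R * ((K * R + K * R) + 0) = 2 * X" unfolding X_def by (simp add: algebra_simps)
  have e3: "R * ((K * R + 2 * K * R + K * R) + 0) = 4 * X" unfolding X_def by (simp add: algebra_simps)
  have e4: "2 * R * ((K * R + K * R) + 0) = 4 * X" unfolding X_def by (simp add: algebra_simps)
  show "R * (K * R + F) \<le> 32 * K * R^3" unfolding e1 using b c kr3 by linarith
  show "R * (K * R + F) + R * ((K * R + K * R) + 0) \<le> 32 * K * R^3" unfolding e1 e2 using b c kr3 by linarith
  show "R * (K * R + F) + 2 * R * ((K * R + K * R) + 0) + R * ((K * R + 2 * K * R + K * R) + 0) \<le> 32 * K * R^3"
    unfolding e1 e3 e4 using b c kr3 by linarith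
qed

lemma Fop_LD:
  assumes h: "0 < h" "h < 2*pi" and bc: "w 0 t = w (2*pi) t"
    and A: "LD (\<lambda>x. per (\<lambda>y. w y t) x) Dw R R R"
    and Bk: "LD (per k) (per k1) K K K" and k0: "k 0 = k (2*pi)"
    and K: "0 \<le> K" and R: "1 \<le> R"
  shows "\<exists>gd. LD (per (\<lambda>x. Fop k h w x t)) gd (32 * K * R^3) (32 * K * R^3) (32 * K * R^3)"
proof -
  let ?f = "fterm k h w t"
  have kb: "\<bar>k x\<bar> \<le> K" if "0 \<le> x" "x \<le> 2*pi" for x
    using Bk per_eq2[OF that, of k] k0 unfolding LD_def by metis
  have wb: "\<bar>per (\<lambda>y. w y t) x\<bar> \<le> R" for x using A unfolding LD_def by blast
  have Fb: "\<bar>?f\<bar> \<le> 2*pi * K * R^2"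
    by (rule fterm_bound[where w=w and t=t and k=k and K=K and R=R and h=h]) (use h bc kb wb K R in auto)
  have "2*pi * K * R^2 \<le> 8 * K * R^2" using pi_less_4 K by (intro mult_right_mono) auto
  hence Fb8: "\<bar>?f\<bar> \<le> 8 * K * R^2" using Fb by linarith
  have C: "LD (\<lambda>x. per (\<lambda>y. w y t) (x - h)) (\<lambda>x. Dw (x - h)) R R R" by (rule LD_shift[OF A])
  note E = LD_mult[OF A LD_diff[OF LD_mult[OF Bk C] LD_const[of ?f]]]
  note E' = LD_mono[OF E arith_G[OF K R Fb8 abs_ge_zero]]
  have "per (\<lambda>x. Fop k h w x t) = (\<lambda>x. per (\<lambda>y. w y t) x * (per k x * per (\<lambda>y. w y t) (x - h) - ?f))"
    using Fop_per[where w=w and t=t and h=h and k=k, OF h bc] by blast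
  thus ?thesis using E' by (intro exI[of _ "\<lambda>x. Dw x * (per k x * per (\<lambda>y. w y t) (x - h) - ?f) + per (\<lambda>y. w y t) x * ((per k1 x * per (\<lambda>y. w y t) (x - h) + per k x * Dw (x - h)) - 0)"]) simp
qed


definition D2 :: "(real \<Rightarrow> real) \<Rightarrow> real \<Rightarrow> real \<Rightarrow> real" where
  "D2 f d x = (f (x + d) - 2 * f x + f (x - d)) / d^2"

lemma deriv_plus_shift: "(f has_real_derivative D) (at (x + c)) \<Longrightarrow> ((\<lambda>y. f (y + c)) has_real_derivative D) (at x)"
  using DERIV_shift by blast

lemma deriv_minus_shift: "(f has_real_derivative D) (at (x - c)) \<Longrightarrow> ((\<lambda>y. f (y - c)) has_real_derivative D) (at x)"
  using DERIV_shift[of f D x "- c"] by simp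

lemma D2_deriv:
  assumes "\<And>y. (f has_real_derivative f' y) (at y)"
  shows "((\<lambda>y. D2 f d y) has_real_derivative D2 f' d x) (at x)"
proof -
  have a: "((\<lambda>y. f (y + d)) has_real_derivative f' (x + d)) (at x)" by (rule deriv_plus_shift[OF assms])
  have b: "((\<lambda>y. f (y - d)) has_real_derivative f' (x - d)) (at x)" by (rule deriv_minus_shift[OF assms])
  show ?thesis unfolding D2_def
    by (rule DERIV_cdivide[OF DERIV_add[OF DERIV_diff[OF a DERIV_cmult[OF assms]] b]])
qed

lemma D2_deriv_t:
  assumes "\<And>z. ((\<lambda>s. F z s) has_real_derivative F' z) (at t)"
  shows "((\<lambda>s. D2 (\<lambda>y. F y s) d x) has_real_derivative D2 F' d x) (at t)"
  unfolding D2_def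
  by (rule DERIV_cdivide[OF DERIV_add[OF DERIV_diff[OF assms DERIV_cmult[OF assms]] assms]])

lemma D2_LD:
  assumes "LD f f' a b c" "0 < d"
  shows "\<bar>D2 f d x\<bar> \<le> 2 * c"
proof -
  have "\<bar>f (x + d) - 2 * f x + f (x - d)\<bar> \<le> 2 * c * d^2" by (rule LD_delta2[OF assms])
  thus ?thesis using assms(2) by (simp add: D2_def abs_divide divide_le_eq)
qed

definition Good :: "real \<Rightarrow> real \<Rightarrow> (real \<Rightarrow> real \<Rightarrow> real) \<Rightarrow> bool" where
  "Good T R w \<longleftrightarrow> (\<exists>D. \<forall>t. 0 < t \<and> t < T \<longrightarrow>
     LD (\<lambda>x. per (\<lambda>y. w y t) x) (\<lambda>x. D x t) R R R \<and> w 0 t = w (2*pi) t)"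

lemma red_decomp: "x = red x + 2*pi * of_int (floor (x/(2*pi)))" by (simp add: red_def)

lemma per_red_shift: "per f (red x + c) = per f (x + c)"
proof -
  have "x + c = (red x + c) + 2*pi * of_int (floor (x/(2*pi)))" using red_decomp[of x] by simp
  hence "per f (x + c) = per f ((red x + c) + 2*pi * of_int (floor (x/(2*pi))))"
    by (rule arg_cong[where f="per f"])
  also have "\<dots> = per f (red x + c)" by (rule per_shift_int)
  finally show ?thesis by simp
qed


lemma step:
  fixes h \<alpha> T K P0 P1 P2 R :: real and \<phi> \<phi>1 k k1 :: "real \<Rightarrow> real" and w v :: "real \<Rightarrow> real \<Rightarrow> real"
  assumes h: "0 < h" "h < 2*pi" and \<alpha>: "0 < \<alpha>" and T: "0 < T"
    and phiLD: "LD (per \<phi>) (per \<phi>1) P0 P1 P2"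
    and kLD: "LD (per k) (per k1) K K K" and k0: "k 0 = k (2*pi)" and K: "0 \<le> K" and R: "1 \<le> R"
    and small1: "P0 + T * (32 * K * R^3) \<le> R"
    and small2: "2*pi * (2 * P2 + 2 * T * (32 * K * R^3)) \<le> R"
    and good: "Good T R w" and sol: "solves_linear \<alpha> T \<phi> (Fop k h w) v"
  shows "Good T R v \<and> C21_norm T v \<le> 3 * R + \<alpha> * R + 32 * K * R^3"
proof -
  define G where "G = 32 * K * R^3"
  define V2 where "V2 = 2 * P2 + 2 * T * G"
  have G0: "0 \<le> G" unfolding G_def using K R by simp
  have P2: "0 \<le> P2" "0 \<le> P0" using LD_nonneg[OF phiLD] by auto
  have V2R: "V2 \<le> R"
  proof -
    have "0 \<le> V2" unfolding V2_def using P2 G0 T by simp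
    moreover have "2*pi * V2 \<le> R" using small2 unfolding V2_def G_def .
    moreover have "1 * V2 \<le> (2*pi) * V2" using \<open>0 \<le> V2\<close> pi_gt3 by (intro mult_right_mono) auto
    ultimately show ?thesis by linarith
  qed
  obtain vx vxx vt where C: "C21_derivs T v vx vxx vt"
    and eqn: "\<And>x t. 0 \<le> x \<Longrightarrow> x \<le> 2*pi \<Longrightarrow> 0 \<le> t \<Longrightarrow> t \<le> T \<Longrightarrow> vt x t - \<alpha> * vxx x t = Fop k h w x t"
    and init: "\<And>x. 0 \<le> x \<Longrightarrow> x \<le> 2*pi \<Longrightarrow> v x 0 = \<phi> x"
    and bc: "\<And>t. 0 \<le> t \<Longrightarrow> t \<le> T \<Longrightarrow> v 0 t = v (2*pi) t"
    and bcx: "\<And>t. 0 \<le> t \<Longrightarrow> t \<le> T \<Longrightarrow> vx 0 t = vx (2*pi) t"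
    using sol unfolding solves_linear_def by blast
  have cv: "continuous_on ({0..2*pi} \<times> {0..T}) (\<lambda>(x, t). v x t)"
    and cvx: "continuous_on ({0..2*pi} \<times> {0..T}) (\<lambda>(x, t). vx x t)"
    and cvxx: "continuous_on ({0..2*pi} \<times> {0..T}) (\<lambda>(x, t). vxx x t)"
    and cvt: "continuous_on ({0..2*pi} \<times> {0..T}) (\<lambda>(x, t). vt x t)"
    using C unfolding C21_derivs_def rect_def by blast+
  have dx: "\<And>x t. 0 < x \<Longrightarrow> x < 2*pi \<Longrightarrow> 0 < t \<Longrightarrow> t < T \<Longrightarrow> ((\<lambda>y. v y t) has_real_derivative vx x t) (at x)"
    and dxx: "\<And>x t. 0 < x \<Longrightarrow> x < 2*pi \<Longrightarrow> 0 < t \<Longrightarrow> t < T \<Longrightarrow> ((\<lambda>y. vx y t) has_real_derivative vxx x t) (at x)"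
    and dt: "\<And>x t. 0 < x \<Longrightarrow> x < 2*pi \<Longrightarrow> 0 < t \<Longrightarrow> t < T \<Longrightarrow> ((\<lambda>s. v x s) has_real_derivative vt x t) (at t)"
    using C unfolding C21_derivs_def by blast+
  obtain D where gD: "\<And>t. 0 < t \<Longrightarrow> t < T \<Longrightarrow> LD (\<lambda>x. per (\<lambda>y. w y t) x) (\<lambda>x. D x t) R R R"
    and wbc: "\<And>t. 0 < t \<Longrightarrow> t < T \<Longrightarrow> w 0 t = w (2*pi) t"
    using good unfolding Good_def by blast
  have phib: "\<bar>per \<phi> x\<bar> \<le> P0" for x using phiLD unfolding LD_def by blast
  have gLD: "\<exists>gd. LD (per (\<lambda>x. Fop k h w x t)) gd G G G" if "0 < t" "t < T" for t
    unfolding G_def by (rule Fop_LD[where w=w and t=t and h=h and k=k and R=R and K=K, OF h wbc[OF that] gD[OF that] kLD k0 K R])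
  have gbc: "Fop k h w 0 t = Fop k h w (2*pi) t" if "0 < t" "t < T" for t
    by (rule Fop_bc[where w=w and t=t and h=h and k=k, OF h wbc[OF that] k0])
  have gb: "\<bar>Fop k h w x t\<bar> \<le> G" if a: "0 < t" "t < T" "0 \<le> x" "x \<le> 2*pi" for x t
  proof -
    obtain gd where "LD (per (\<lambda>x. Fop k h w x t)) gd G G G" using gLD[OF a(1,2)] by blast
    hence "\<bar>per (\<lambda>x. Fop k h w x t) x\<bar> \<le> G" unfolding LD_def by blast
    thus ?thesis using per_eq2[OF a(3,4), of "\<lambda>x. Fop k h w x t"] gbc[OF a(1,2)] by simp
  qed
  have dtv: "((\<lambda>s. v x s) has_real_derivative vt x t) (at t)" if "0 \<le> x" "x \<le> 2*pi" "0 < t" "t < T" for x t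
    by (rule bdry_time_deriv[OF cv cvt dt]) (use that in auto)
  have vt0: "vt 0 t = vt (2*pi) t" if t: "0 < t" "t < T" for t
  proof -
    have "eventually (\<lambda>s. s \<in> {0<..<T}) (nhds t)" using t by (intro eventually_nhds_in_open) auto
    hence ev: "eventually (\<lambda>s. v 0 s = v (2*pi) s) (nhds t)" by (rule eventually_mono) (use bc in auto)
    have "((\<lambda>s. v (2*pi) s) has_real_derivative vt 0 t) (at t)"
      using dtv[of 0 t] t DERIV_cong_ev[OF refl ev refl] by simp
    thus ?thesis using dtv[of "2*pi" t] t DERIV_unique by auto
  qed
  have vxx0: "vxx 0 t = vxx (2*pi) t" if t: "0 < t" "t < T" for t
  proof -
    have "vt 0 t - \<alpha> * vxx 0 t = vt (2*pi) t - \<alpha> * vxx (2*pi) t"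
      using eqn[of 0 t] eqn[of "2*pi" t] gbc[OF t] t by simp
    thus ?thesis using vt0[OF t] \<alpha> by simp
  qed
  define Pv where "Pv x t = per (\<lambda>y. v y t) x" for x t
  define Pvx where "Pvx x t = per (\<lambda>y. vx y t) x" for x t
  define Pvxx where "Pvxx x t = per (\<lambda>y. vxx y t) x" for x t
  define Pvt where "Pvt x t = per (\<lambda>y. vt y t) x" for x t
  define Pg where "Pg x t = per (\<lambda>y. Fop k h w y t) x" for x t
  have dPv: "((\<lambda>y. Pv y t) has_real_derivative Pvx x t) (at x)" if t: "0 < t" "t < T" for x t
  proof -
    have "(per (\<lambda>y. v y t) has_real_derivative per (\<lambda>y. vx y t) x) (at x)"
    proof (rule per_deriv)
      show "continuous_on {0..2*pi} (\<lambda>y. v y t)" by (rule cont_slice_x[OF cv]) (use t in auto)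
      show "continuous_on {0..2*pi} (\<lambda>y. vx y t)" by (rule cont_slice_x[OF cvx]) (use t in auto)
      show "((\<lambda>y. v y t) has_real_derivative vx x t) (at x)" if "0 < x" "x < 2*pi" for x
        using dx[OF that t] .
      show "v 0 t = v (2*pi) t" "vx 0 t = vx (2*pi) t" using bc bcx t by auto
    qed
    thus ?thesis unfolding Pv_def Pvx_def by simp
  qed
  have dPvx: "((\<lambda>y. Pvx y t) has_real_derivative Pvxx x t) (at x)" if t: "0 < t" "t < T" for x t
  proof -
    have "(per (\<lambda>y. vx y t) has_real_derivative per (\<lambda>y. vxx y t) x) (at x)"
    proof (rule per_deriv)
      show "continuous_on {0..2*pi} (\<lambda>y. vx y t)" by (rule cont_slice_x[OF cvx]) (use t in auto)
      show "continuous_on {0..2*pi} (\<lambda>y. vxx y t)" by (rule cont_slice_x[OF cvxx]) (use t in auto)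
      show "((\<lambda>y. vx y t) has_real_derivative vxx x t) (at x)" if "0 < x" "x < 2*pi" for x
        using dxx[OF that t] .
      show "vx 0 t = vx (2*pi) t" using bcx t by auto
      show "vxx 0 t = vxx (2*pi) t" using vxx0[OF t] .
    qed
    thus ?thesis unfolding Pvx_def Pvxx_def by simp
  qed
  have dPvt: "((\<lambda>s. Pv x s) has_real_derivative Pvt x t) (at t)" if t: "0 < t" "t < T" for x t
    unfolding Pv_def Pvt_def per_red using dtv[of "red x" t] red_range[of x] t by simp
  have eqP: "Pvt x t - \<alpha> * Pvxx x t = Pg x t" if t: "0 < t" "t < T" for x t
    unfolding Pvt_def Pvxx_def Pg_def per_red using eqn[of "red x" t] red_range[of x] t by simp
  have Pv0: "Pv x 0 = per \<phi> x" for x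
    unfolding Pv_def per_red using init[of "red x"] red_range[of x] by simp
  have PvE: "Pv x t = v x t" if "0 \<le> x" "x \<le> 2*pi" "0 \<le> t" "t \<le> T" for x t
    unfolding Pv_def using per_eq2[OF that(1,2), of "\<lambda>y. v y t"] bc that by simp
  have PvxE: "Pvxx x t = vxx x t" if "0 \<le> x" "x < 2*pi" for x t
    unfolding Pvxx_def using per_eq[OF that, of "\<lambda>y. vxx y t"] by simp
  have contPv: "continuous_on ({-2*pi..4*pi} \<times> {0..T}) (\<lambda>(x, t). Pv x t)"
    unfolding Pv_def by (rule per_cont_big[OF cv bc]) auto
  have PgLD: "\<exists>gd. LD (\<lambda>y. Pg y t) gd G G G" if "0 < t" "t < T" for t
    unfolding Pg_def using gLD[OF that] by simp
  have Pgb: "\<bar>Pg x t\<bar> \<le> G" if "0 < t" "t < T" for x t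
    using PgLD[OF that] unfolding LD_def by blast
  have perPv: "Pv x t = per (\<lambda>y. Pv y t) x" for x t
    unfolding Pv_def using per_per[of "\<lambda>y. v y t" x] by simp
  have Pvshift: "Pv (red x + c) t = Pv (x + c) t" for x c t
    unfolding Pv_def by (rule per_red_shift)
  have MP1: "\<bar>Pv x t\<bar> \<le> P0 + G * t" if x: "0 \<le> x" "x \<le> 2*pi" and t: "0 \<le> t" "t < T" for x t
  proof (rule max_principle[where W=Pv and Wx=Pvx and Wxx=Pvxx and Wt=Pvt and G=Pg, OF T \<alpha> _ perPv dPv dPvx dPvt eqP Pgb _ x t])
    show "continuous_on ({0..2*pi} \<times> {0..T}) (\<lambda>(x, t). Pv x t)"
      by (rule continuous_on_subset[OF contPv]) auto
    show "\<bar>Pv x 0\<bar> \<le> P0" for x using Pv0 phib by simp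
  qed
  have vb: "\<bar>v x t\<bar> \<le> R" if x: "0 \<le> x" "x \<le> 2*pi" and t: "0 < t" "t < T" for x t
  proof -
    have "G * t \<le> G * T" using G0 t by (intro mult_left_mono) auto
    moreover have "P0 + G * T \<le> R" using small1 unfolding G_def by (simp add: mult.commute)
    moreover have "\<bar>Pv x t\<bar> \<le> P0 + G * t" using MP1[OF x] t by simp
    moreover have "Pv x t = v x t" using PvE[OF x] t by simp
    ultimately show ?thesis by linarith
  qed
  have cshift: "continuous_on ({0..2*pi} \<times> {0..T}) (\<lambda>(x, t). Pv (x + c) t)" if c: "\<bar>c\<bar> \<le> 2*pi" for c
  proof -
    have "continuous_on ({0..2*pi} \<times> {0..T}) (\<lambda>p. (\<lambda>(x, t). Pv x t) ((\<lambda>(x, t). (x + c, t)) p))"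
    proof (rule continuous_on_compose2[OF contPv])
      show "continuous_on ({0..2*pi} \<times> {0..T}) (\<lambda>(x, t). (x + c, t))"
        by (auto simp: case_prod_beta intro!: continuous_intros)
      show "(\<lambda>(x, t). (x + c, t)) ` ({0..2*pi} \<times> {0..T}) \<subseteq> {-2*pi..4*pi} \<times> {0..T}"
        using c by (auto simp: abs_le_iff)
    qed
    thus ?thesis by (simp add: case_prod_beta)
  qed
  have MP2: "\<bar>D2 (\<lambda>y. Pv y t) d x\<bar> \<le> 2 * P2 + 2 * G * t"
    if d: "0 < d" "d < 2*pi" and x: "0 \<le> x" "x \<le> 2*pi" and t: "0 \<le> t" "t < T" for d x t
  proof (rule max_principle[where W="\<lambda>x t. D2 (\<lambda>y. Pv y t) d x" and Wx="\<lambda>x t. D2 (\<lambda>y. Pvx y t) d x"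
        and Wxx="\<lambda>x t. D2 (\<lambda>y. Pvxx y t) d x" and Wt="\<lambda>x t. D2 (\<lambda>y. Pvt y t) d x"
        and G="\<lambda>x t. D2 (\<lambda>y. Pg y t) d x", OF T \<alpha> _ _ _ _ _ _ _ _ x t])
    have c1: "continuous_on ({0..2*pi} \<times> {0..T}) (\<lambda>(x, t). Pv (x + d) t)" using cshift[of d] d by simp
    have c2: "continuous_on ({0..2*pi} \<times> {0..T}) (\<lambda>(x, t). Pv (x + 0) t)" using cshift[of 0] by simp
    have c3: "continuous_on ({0..2*pi} \<times> {0..T}) (\<lambda>(x, t). Pv (x + - d) t)" using cshift[of "-d"] d by simp
    show "continuous_on ({0..2*pi} \<times> {0..T}) (\<lambda>(x, t). D2 (\<lambda>y. Pv y t) d x)"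
      using c1 c2 c3 d unfolding D2_def case_prod_beta by (auto intro!: continuous_intros)
    show "D2 (\<lambda>y. Pv y t) d x = per (\<lambda>y. D2 (\<lambda>y. Pv y t) d y) x" for x t
      unfolding per_red D2_def using Pvshift[of x d t] Pvshift[of x 0 t] Pvshift[of x "-d" t] by simp
    show "((\<lambda>y. D2 (\<lambda>y. Pv y t) d y) has_real_derivative D2 (\<lambda>y. Pvx y t) d x) (at x)"
      if "0 < t" "t < T" for x t by (rule D2_deriv) (use dPv[OF that] in simp)
    show "((\<lambda>y. D2 (\<lambda>y. Pvx y t) d y) has_real_derivative D2 (\<lambda>y. Pvxx y t) d x) (at x)"
      if "0 < t" "t < T" for x t by (rule D2_deriv) (use dPvx[OF that] in simp)
    show "((\<lambda>s. D2 (\<lambda>y. Pv y s) d x) has_real_derivative D2 (\<lambda>y. Pvt y t) d x) (at t)"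
      if "0 < t" "t < T" for x t by (rule D2_deriv_t) (use dPvt[OF that] in simp)
    show "D2 (\<lambda>y. Pvt y t) d x - \<alpha> * D2 (\<lambda>y. Pvxx y t) d x = D2 (\<lambda>y. Pg y t) d x"
      if "0 < t" "t < T" for x t
      unfolding D2_def using eqP[OF that, of "x + d"] eqP[OF that, of x] eqP[OF that, of "x - d"] d
      by (simp add: field_simps)
    show "\<bar>D2 (\<lambda>y. Pg y t) d x\<bar> \<le> 2 * G" if tt: "0 < t" "t < T" for x t
    proof -
      obtain gd where "LD (\<lambda>y. Pg y t) gd G G G" using PgLD[OF tt] by blast
      from D2_LD[OF this d(1)] show ?thesis .
    qed
    show "\<bar>D2 (\<lambda>y. Pv y 0) d x\<bar> \<le> 2 * P2" for x
      using D2_LD[OF phiLD d(1), of x] Pv0 by simp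
  qed
  have vxxb: "\<bar>vxx x t\<bar> \<le> V2" if x: "0 < x" "x < 2*pi" and t: "0 < t" "t < T" for x t
  proof -
    have "\<bar>Pvxx x t\<bar> \<le> V2"
    proof (rule d2_bound[where f="\<lambda>y. Pv y t" and fd="\<lambda>y. Pvx y t"])
      show "((\<lambda>y. Pv y t) has_real_derivative Pvx y t) (at y)" for y by (rule dPv[OF t])
      show "((\<lambda>y. Pvx y t) has_real_derivative Pvxx x t) (at x)" by (rule dPvx[OF t])
      show "(0::real) < 2*pi" by simp
      show "\<bar>Pv (x + d) t - 2 * Pv x t + Pv (x - d) t\<bar> \<le> V2 * d^2" if "0 < d" "d < 2*pi" for d
      proof -
        have "\<bar>D2 (\<lambda>y. Pv y t) d x\<bar> \<le> 2 * P2 + 2 * G * t" using MP2[OF that, of x t] x t by simp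
        also have "\<dots> \<le> V2"
        proof -
          have "G * t \<le> G * T" using G0 t by (intro mult_left_mono) auto
          thus ?thesis unfolding V2_def by (simp add: mult.commute)
        qed
        finally have "\<bar>Pv (x + d) t - 2 * Pv x t + Pv (x - d) t\<bar> / d^2 \<le> V2"
          by (simp add: D2_def abs_divide)
        thus ?thesis using that by (simp add: divide_le_eq)
      qed
    qed
    thus ?thesis using PvxE[of x t] x by simp
  qed
  have vxb: "\<bar>vx x t\<bar> \<le> R" if x: "0 \<le> x" "x \<le> 2*pi" and t: "0 < t" "t < T" for x t
  proof -
    have cvt': "continuous_on {0..2*pi} (\<lambda>y. v y t)" by (rule cont_slice_x[OF cv]) (use t in auto)
    have cvxt: "continuous_on {0..2*pi} (\<lambda>y. vx y t)" by (rule cont_slice_x[OF cvx]) (use t in auto)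
    obtain z where z: "0 < z" "z < 2*pi" "v (2*pi) t - v 0 t = (2*pi - 0) * vx z t"
      using MVT_deriv[of 0 "2*pi" "\<lambda>y. v y t" "\<lambda>y. vx y t"] cvt' dx t by auto
    have vz: "vx z t = 0" using z bc[of t] t by simp
    have "\<bar>vx x t - vx z t\<bar> \<le> V2 * \<bar>x - z\<bar>"
      by (rule lip_from_deriv_ivl[OF cvxt, of "\<lambda>y. vxx y t"]) (use dxx vxxb t x z in auto)
    also have "\<dots> \<le> V2 * (2*pi)"
      using x z V2R unfolding V2_def using G0 P2 T by (intro mult_left_mono) (auto simp: abs_le_iff)
    also have "\<dots> \<le> R" using small2 unfolding V2_def G_def by (simp add: mult.commute)
    finally show ?thesis using vz by simp
  qed
  have goodv: "Good T R v"
    unfolding Good_def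
  proof (intro exI[of _ Pvx] allI impI conjI)
    fix t assume t: "0 < t \<and> t < T"
    have "LD (per (\<lambda>y. v y t)) (per (\<lambda>y. vx y t)) R R R"
    proof (rule per_LD)
      show "continuous_on {0..2*pi} (\<lambda>y. v y t)" by (rule cont_slice_x[OF cv]) (use t in auto)
      show "continuous_on {0..2*pi} (\<lambda>y. vx y t)" by (rule cont_slice_x[OF cvx]) (use t in auto)
      show "((\<lambda>y. v y t) has_real_derivative vx x t) (at x)" if "0 < x" "x < 2*pi" for x using dx that t by auto
      show "((\<lambda>y. vx y t) has_real_derivative vxx x t) (at x)" if "0 < x" "x < 2*pi" for x using dxx that t by auto
      show "v 0 t = v (2*pi) t" "vx 0 t = vx (2*pi) t" using bc bcx t by auto
      show "\<bar>v x t\<bar> \<le> R" if "0 \<le> x" "x \<le> 2*pi" for x using vb that t by auto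
      show "\<bar>vx x t\<bar> \<le> R" if "0 \<le> x" "x \<le> 2*pi" for x using vxb that t by auto
      show "\<bar>vxx x t\<bar> \<le> R" if "0 < x" "x < 2*pi" for x using vxxb[OF that] t V2R by fastforce
    qed
    thus "LD (\<lambda>x. per (\<lambda>y. v y t) x) (\<lambda>x. Pvx x t) R R R" unfolding Pvx_def by simp
    show "v 0 t = v (2*pi) t" using bc t by auto
  qed
  define N where "N = 3 * R + \<alpha> * R + G"
  have intb: "\<bar>v x t\<bar> + \<bar>vx x t\<bar> + \<bar>vxx x t\<bar> + \<bar>vt x t\<bar> \<le> N"
    if x: "0 < x" "x < 2*pi" and t: "0 < t" "t < T" for x t
  proof -
    have a: "\<bar>v x t\<bar> \<le> R" "\<bar>vx x t\<bar> \<le> R" using vb vxb x t by auto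
    have b: "\<bar>vxx x t\<bar> \<le> R" using vxxb[OF x t] V2R by simp
    have "vt x t = \<alpha> * vxx x t + Fop k h w x t" using eqn[of x t] x t by simp
    moreover have "\<bar>\<alpha> * vxx x t\<bar> \<le> \<alpha> * R" using b \<alpha> by (simp add: abs_mult mult_left_mono)
    moreover have "\<bar>Fop k h w x t\<bar> \<le> G" using gb[OF t] x by simp
    ultimately have "\<bar>vt x t\<bar> \<le> \<alpha> * R + G" by simp
    thus ?thesis using a b unfolding N_def by simp
  qed
  have allb: "\<bar>v (fst p) (snd p)\<bar> + \<bar>a1 (fst p) (snd p)\<bar> + \<bar>a2 (fst p) (snd p)\<bar> + \<bar>a3 (fst p) (snd p)\<bar> \<le> N"
    if A: "C21_derivs T v a1 a2 a3" and p: "p \<in> rect T" for a1 a2 a3 p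
  proof -
    let ?S = "{0<..<2*pi} \<times> {0<..<T}"
    have cl: "closure ?S = rect T" unfolding rect_def closure_Times using T by simp
    have ca: "continuous_on (rect T) (\<lambda>(x, t). v x t)" "continuous_on (rect T) (\<lambda>(x, t). a1 x t)"
      "continuous_on (rect T) (\<lambda>(x, t). a2 x t)" "continuous_on (rect T) (\<lambda>(x, t). a3 x t)"
      using A unfolding C21_derivs_def by blast+
    have da: "\<And>x t. 0 < x \<Longrightarrow> x < 2*pi \<Longrightarrow> 0 < t \<Longrightarrow> t < T \<Longrightarrow>
        ((\<lambda>y. v y t) has_real_derivative a1 x t) (at x) \<and>
        ((\<lambda>y. a1 y t) has_real_derivative a2 x t) (at x) \<and>
        ((\<lambda>s. v x s) has_real_derivative a3 x t) (at t)"
      using A unfolding C21_derivs_def by blast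
    have cF: "continuous_on (closure ?S) (\<lambda>p. \<bar>v (fst p) (snd p)\<bar> + \<bar>a1 (fst p) (snd p)\<bar> + \<bar>a2 (fst p) (snd p)\<bar> + \<bar>a3 (fst p) (snd p)\<bar>)"
      unfolding cl using ca by (auto simp: case_prod_beta intro!: continuous_intros)
    show ?thesis
    proof (rule continuous_le_on_closure[OF cF])
      show "p \<in> closure ?S" using p cl by simp
    next
      fix q assume q: "q \<in> ?S"
      obtain x t where qe: "q = (x, t)" by (cases q)
      have x: "0 < x" "x < 2*pi" and t: "0 < t" "t < T" using q qe by auto
      have e1: "a1 y t = vx y t" if "0 < y" "y < 2*pi" for y
        using da[OF that t] dx[OF that t] DERIV_unique by blast
      have e3: "a3 x t = vt x t" using da[OF x t] dt[OF x t] DERIV_unique by blast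
      have "eventually (\<lambda>y. y \<in> {0<..<2*pi}) (nhds x)" using x by (intro eventually_nhds_in_open) auto
      hence ev: "eventually (\<lambda>y. a1 y t = vx y t) (nhds x)" by (rule eventually_mono) (use e1 in auto)
      have "((\<lambda>y. vx y t) has_real_derivative a2 x t) (at x)"
        using da[OF x t] DERIV_cong_ev[OF refl ev refl] by simp
      hence e2: "a2 x t = vxx x t" using dxx[OF x t] DERIV_unique by blast
      show "\<bar>v (fst q) (snd q)\<bar> + \<bar>a1 (fst q) (snd q)\<bar> + \<bar>a2 (fst q) (snd q)\<bar> + \<bar>a3 (fst q) (snd q)\<bar> \<le> N"
        using intb[OF x t] e1[OF x] e2 e3 qe by simp
    qed
  qed
  have "C21_norm T v \<le> N"
  proof -
    define dd where "dd = (SOME d. C21_derivs T v (fst d) (fst (snd d)) (snd (snd d)))"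
    have "\<exists>d. C21_derivs T v (fst d) (fst (snd d)) (snd (snd d))"
      using C by (intro exI[of _ "(vx, vxx, vt)"]) simp
    hence Cd: "C21_derivs T v (fst dd) (fst (snd dd)) (snd (snd dd))"
      unfolding dd_def by (rule someI_ex)
    have ne: "rect T \<noteq> {}" unfolding rect_def using T by auto
    have "(SUP p\<in>rect T. \<bar>v (fst p) (snd p)\<bar> + \<bar>fst dd (fst p) (snd p)\<bar>
          + \<bar>fst (snd dd) (fst p) (snd p)\<bar> + \<bar>snd (snd dd) (fst p) (snd p)\<bar>) \<le> N"
      by (rule cSUP_least[OF ne]) (rule allb[OF Cd])
    thus ?thesis unfolding C21_norm_def Let_def dd_def .
  qed
  thus ?thesis using goodv unfolding N_def G_def by simp
qed


lemma cont_bound: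
  fixes f :: "real \<Rightarrow> real"
  assumes "continuous_on {a..b} f"
  shows "\<exists>B. \<forall>x\<in>{a..b}. \<bar>f x\<bar> \<le> B"
proof -
  have "bounded (f ` {a..b})" by (intro compact_imp_bounded compact_continuous_image assms) auto
  thus ?thesis unfolding bounded_real by auto
qed

theorem lemma2:
  fixes h \<alpha> T :: real
    and \<phi> \<phi>1 \<phi>2 :: "real \<Rightarrow> real"
  assumes h: "0 < h" "h < 2*pi"
    and \<alpha>: "0 < \<alpha>"
    and T: "0 < T"
    and \<phi>_d1: "\<And>x. x \<in> {-h..2*pi} \<Longrightarrow> (\<phi> has_real_derivative \<phi>1 x) (at x within {-h..2*pi})"
    and \<phi>_d2: "\<And>x. x \<in> {-h..2*pi} \<Longrightarrow> (\<phi>1 has_real_derivative \<phi>2 x) (at x within {-h..2*pi})"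
    and \<phi>_c2: "continuous_on {-h..2*pi} \<phi>2"
    and \<phi>_nonneg: "\<And>x. x \<in> {-h..2*pi} \<Longrightarrow> 0 \<le> \<phi> x"
    and \<phi>_int: "integral {0..2*pi} \<phi> = 1"
    and \<phi>_per: "\<And>x. x \<in> {-h..0} \<Longrightarrow> \<phi> x = \<phi> (x + 2*pi)"
  shows "\<exists>\<delta>>0. \<forall>(k::real \<Rightarrow> real) k1 k2 (u::nat \<Rightarrow> real \<Rightarrow> real \<Rightarrow> real).
     (\<forall>x\<in>{0..2*pi}. (k has_real_derivative k1 x) (at x within {0..2*pi})) \<longrightarrow>
     (\<forall>x\<in>{0..2*pi}. (k1 has_real_derivative k2 x) (at x within {0..2*pi})) \<longrightarrow>
     continuous_on {0..2*pi} k2 \<longrightarrow>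
     (\<forall>x\<in>{0..2*pi}. 0 < k x) \<longrightarrow>
     k 0 = k (2*pi) \<longrightarrow> k1 0 = k1 (2*pi) \<longrightarrow>
     (SUP x\<in>{0..2*pi}. max \<bar>k x\<bar> (max \<bar>k1 x\<bar> \<bar>k2 x\<bar>)) < \<delta> \<longrightarrow>
     (\<forall>x\<in>{0..2*pi}. \<forall>t\<in>{0..T}. u 0 x t = \<phi> x) \<longrightarrow>
     (\<forall>m. solves_linear \<alpha> T \<phi> (Fop k h (u m)) (u (Suc m))) \<longrightarrow>
     (\<exists>M. \<forall>m. C21_norm T (u m) \<le> M)"
proof -
  obtain \<phi>0eq \<phi>1eq where phfacts: "\<phi> 0 = \<phi> (2*pi)" "\<phi>1 0 = \<phi>1 (2*pi)"
    "continuous_on {0..2*pi} \<phi>" "continuous_on {0..2*pi} \<phi>1"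
    "\<And>x. 0 < x \<Longrightarrow> x < 2*pi \<Longrightarrow> (\<phi> has_real_derivative \<phi>1 x) (at x)"
    "\<And>x. 0 < x \<Longrightarrow> x < 2*pi \<Longrightarrow> (\<phi>1 has_real_derivative \<phi>2 x) (at x)"
    using phi_facts[OF h \<phi>_d1 \<phi>_d2 \<phi>_per] by blast
  have c2: "continuous_on {0..2*pi} \<phi>2" by (rule continuous_on_subset[OF \<phi>_c2]) (use h in auto)
  obtain P0 where P0: "\<And>x. x \<in> {0..2*pi} \<Longrightarrow> \<bar>\<phi> x\<bar> \<le> P0" using cont_bound[OF phfacts(3)] by blast
  obtain P1 where P1: "\<And>x. x \<in> {0..2*pi} \<Longrightarrow> \<bar>\<phi>1 x\<bar> \<le> P1" using cont_bound[OF phfacts(4)] by blast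
  obtain P2 where P2: "\<And>x. x \<in> {0..2*pi} \<Longrightarrow> \<bar>\<phi>2 x\<bar> \<le> P2" using cont_bound[OF c2] by blast
  have phiLD: "LD (per \<phi>) (per \<phi>1) P0 P1 P2"
    by (rule per_LD[OF phfacts(3,4,5,6,1,2)]) (use P0 P1 P2 in auto)
  have Pnn: "0 \<le> P0" "0 \<le> P1" "0 \<le> P2" using LD_nonneg[OF phiLD] by auto
  define R where "R = 16 * (P0 + P1 + P2) + 2"
  have R: "1 \<le> R" unfolding R_def using Pnn by simp
  have R0: "0 < R" using R by simp
  define \<delta> where "\<delta> = 1 / (512 * T * R^3)"
  have \<delta>: "0 < \<delta>" unfolding \<delta>_def using T R0 by simp
  have TG: "T * (32 * \<delta> * R^3) = 1/16" unfolding \<delta>_def using T R0 by (simp add: field_simps)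
  have small1: "P0 + T * (32 * \<delta> * R^3) \<le> R"
  proof -
    have "P0 + T * (32 * \<delta> * R^3) = P0 + 1/16" using TG by simp
    also have "\<dots> \<le> R" unfolding R_def using Pnn by simp
    finally show ?thesis .
  qed
  have small2: "2*pi * (2 * P2 + 2 * T * (32 * \<delta> * R^3)) \<le> R"
  proof -
    have "2 * T * (32 * \<delta> * R^3) = 1/8" using TG by simp
    hence "2*pi * (2 * P2 + 2 * T * (32 * \<delta> * R^3)) = 2*pi * (2 * P2 + 1/8)" by simp
    also have "\<dots> \<le> 8 * (2 * P2 + 1/8)" using pi_less_4 Pnn by (intro mult_right_mono) auto
    finally show ?thesis unfolding R_def using Pnn by simp
  qed
  define M0 where "M0 = 3 * R + \<alpha> * R + 32 * \<delta> * R^3"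
  show ?thesis
  proof (rule exI[of _ \<delta>], intro conjI allI impI)
    show "0 < \<delta>" by (fact \<delta>)
    fix k k1 k2 :: "real \<Rightarrow> real" and u :: "nat \<Rightarrow> real \<Rightarrow> real \<Rightarrow> real"
    assume kd1: "\<forall>x\<in>{0..2*pi}. (k has_real_derivative k1 x) (at x within {0..2*pi})"
      and kd2: "\<forall>x\<in>{0..2*pi}. (k1 has_real_derivative k2 x) (at x within {0..2*pi})"
      and ck2: "continuous_on {0..2*pi} k2"
      and kpos: "\<forall>x\<in>{0..2*pi}. 0 < k x"
      and k0: "k 0 = k (2*pi)" and k10: "k1 0 = k1 (2*pi)"
      and ksup: "(SUP x\<in>{0..2*pi}. max \<bar>k x\<bar> (max \<bar>k1 x\<bar> \<bar>k2 x\<bar>)) < \<delta>"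
      and u0: "\<forall>x\<in>{0..2*pi}. \<forall>t\<in>{0..T}. u 0 x t = \<phi> x"
      and sol: "\<forall>m. solves_linear \<alpha> T \<phi> (Fop k h (u m)) (u (Suc m))"
    have ck: "continuous_on {0..2*pi} k" by (rule DERIV_continuous_on) (use kd1 in blast)
    have ck1: "continuous_on {0..2*pi} k1" by (rule DERIV_continuous_on) (use kd2 in blast)
    have kb: "max \<bar>k x\<bar> (max \<bar>k1 x\<bar> \<bar>k2 x\<bar>) \<le> \<delta>" if x: "x \<in> {0..2*pi}" for x
    proof -
      have "continuous_on {0..2*pi} (\<lambda>x. max \<bar>k x\<bar> (max \<bar>k1 x\<bar> \<bar>k2 x\<bar>))"
        using ck ck1 ck2 by (intro continuous_intros)
      hence "bounded ((\<lambda>x. max \<bar>k x\<bar> (max \<bar>k1 x\<bar> \<bar>k2 x\<bar>)) ` {0..2*pi})"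
        by (intro compact_imp_bounded compact_continuous_image) auto
      hence "bdd_above ((\<lambda>x. max \<bar>k x\<bar> (max \<bar>k1 x\<bar> \<bar>k2 x\<bar>)) ` {0..2*pi})"
        by (rule bounded_imp_bdd_above)
      hence "max \<bar>k x\<bar> (max \<bar>k1 x\<bar> \<bar>k2 x\<bar>) \<le> (SUP x\<in>{0..2*pi}. max \<bar>k x\<bar> (max \<bar>k1 x\<bar> \<bar>k2 x\<bar>))"
        by (rule cSUP_upper[OF x])
      thus ?thesis using ksup by simp
    qed
    have kLD: "LD (per k) (per k1) \<delta> \<delta> \<delta>"
    proof (rule per_LD[OF ck ck1 _ _ k0 k10])
      show "(k has_real_derivative k1 x) (at x)" if "0 < x" "x < 2*pi" for x
        by (rule within_to_at[of k "k1 x" x 0 "2*pi"]) (use kd1 that in auto)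
      show "(k1 has_real_derivative k2 x) (at x)" if "0 < x" "x < 2*pi" for x
        by (rule within_to_at[of k1 "k2 x" x 0 "2*pi"]) (use kd2 that in auto)
      show "\<bar>k x\<bar> \<le> \<delta>" if "0 \<le> x" "x \<le> 2*pi" for x using kb[of x] that by simp
      show "\<bar>k1 x\<bar> \<le> \<delta>" if "0 \<le> x" "x \<le> 2*pi" for x using kb[of x] that by simp
      show "\<bar>k2 x\<bar> \<le> \<delta>" if "0 < x" "x < 2*pi" for x using kb[of x] that by simp
    qed
    have good: "Good T R (u m)" for m
    proof (induction m)
      case 0
      show ?case unfolding Good_def
      proof (intro exI[of _ "\<lambda>x t. per \<phi>1 x"] allI impI conjI)
        fix t assume t: "0 < t \<and> t < T"
        have e: "(\<lambda>x. per (\<lambda>y. u 0 y t) x) = per \<phi>"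
        proof
          fix x show "per (\<lambda>y. u 0 y t) x = per \<phi> x"
            unfolding per_red using u0 red_range[of x] t by simp
        qed
        show "LD (\<lambda>x. per (\<lambda>y. u 0 y t) x) (\<lambda>x. per \<phi>1 x) R R R"
          unfolding e by (rule LD_mono[OF phiLD]) (use Pnn in \<open>auto simp: R_def\<close>)
        show "u 0 0 t = u 0 (2*pi) t" using u0 t phfacts(1) by simp
      qed
    next
      case (Suc m)
      show ?case using step[OF h \<alpha> T phiLD kLD k0 less_imp_le[OF \<delta>] R small1 small2 Suc sol[rule_format, of m]] by blast
    qed
    show "\<exists>M. \<forall>m. C21_norm T (u m) \<le> M"
    proof (intro exI[of _ "max (C21_norm T (u 0)) M0"] allI)
      fix m show "C21_norm T (u m) \<le> max (C21_norm T (u 0)) M0"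
      proof (cases m)
        case 0 thus ?thesis by simp
      next
        case (Suc m')
        have "C21_norm T (u (Suc m')) \<le> M0"
          using step[OF h \<alpha> T phiLD kLD k0 less_imp_le[OF \<delta>] R small1 small2 good[of m'] sol[rule_format, of m']]
          unfolding M0_def by blast
        thus ?thesis using Suc by simp
      qed
    qed
  qed
qed


end
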